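(* The trace K Lagrangian and the gamma-gamma Lagrangian are related by $$\mathcal{L}_K=\mathcal{L}_\Gamma-\sum_{\mu\neq\nu}\partial_\mu\big(\alpha(\mu\nu)\,\partial_\nu\sqrt{|\gamma(\mu\nu)|}\big)+\sum_{\mu,\nu}\partial_\mu\Big(\sqrt{|g|}\big(\xi(\mu)n^\sigma(\mu)n^\nu(\mu)\Gamma^\mu_{\nu\sigma}-\xi(\nu)n^\sigma(\nu)n^\mu(\nu)\Gamma^\nu_{\nu\sigma}\big)\Big)$$ (summation over $\sigma$), where $\mathcal{L}_\Gamma=\sqrt{|g|}g^{\mu\nu}(\Gamma^\rho_{\mu\sigma}\Gamma^\sigma_{\rho\nu}-\Gamma^\rho_{\mu\nu}\Gamma^\sigma_{\rho\sigma})=\sqrt{|g|}R-\partial_\mu\big(\sqrt{|g|}(\Gamma^\mu_{\nu\sigma}g^{\nu\sigma}-\Gamma^\nu_{\nu\sigma}g^{\sigma\mu})\big)$.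
   Context: Metric $g_{\mu\nu}$ of signature $(-,+,+,+)$, $g=\det g_{\mu\nu}$, coordinates with $g^{00}<0$, $g^{ii}>0$; $\Gamma$ is the Levi-Civita connection. $\xi(\mu)=\eta_{\mu\mu}$, $\eta=\mathrm{diag}(-1,1,1,1)$; $n^\nu(\mu)=\xi(\mu)g^{\mu\nu}/\sqrt{|g^{\mu\mu}|}$. For fixed $\mu$: $\gamma(\mu)=\det(g_{ab})_{a,b\neq\mu}$, $\gamma^{ab}(\mu)=g^{ab}-g^{a\mu}g^{\mu b}/g^{\mu\mu}$, $K_{ab}(\mu)=-\Gamma^\mu_{ab}/\sqrt{|g^{\mu\mu}|}$, $K(\mu)=\gamma^{ab}(\mu)K_{ab}(\mu)$. For $\mu\neq\nu$: $\gamma(\mu\nu)=\det(g_{AB})_{A,B\neq\mu,\nu}$, $q(\mu\nu)=g^{\mu\nu}/\sqrt{\xi(\mu)\xi(\nu)g^{\mu\mu}g^{\nu\nu}}$, $\alpha(0i)=\alpha(i0)=\operatorname{arcsinh}q(0i)$, $\alpha(ij)=\operatorname{arcsin}q(ij)$. $\mathcal{L}_K:=\sqrt{|g|}R+2\sum_\mu\partial_\mu(\sqrt{|\gamma(\mu)|}K(\mu))-\sum_{\mu\neq\nu}\partial_\mu\partial_\nu(\sqrt{|\gamma(\mu\nu)|}\alpha(\mu\nu))$ (sums over ordered pairs). *)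

theory Defs
  imports "HOL-Analysis.Analysis"
begin

text \<open>Coordinates x in real^4, indices of type 4 (0 = time, 1,2,3 = space).
  A metric field is g :: real^4 => real^4^4, with components g x $ mu $ nu = g_{mu nu}(x).\<close>

definition pd :: "4 \<Rightarrow> (real^4 \<Rightarrow> real) \<Rightarrow> real^4 \<Rightarrow> real" where
  "pd i f x = deriv (\<lambda>t. f (x + t *\<^sub>R axis i 1)) 0"

fun pds :: "4 list \<Rightarrow> (real^4 \<Rightarrow> real) \<Rightarrow> real^4 \<Rightarrow> real" where
  "pds [] f = f"
| "pds (k # ks) f = pd k (pds ks f)"

definition smooth_on4 :: "(real^4) set \<Rightarrow> (real^4 \<Rightarrow> real) \<Rightarrow> bool" where
  "smooth_on4 U f \<longleftrightarrow> (\<forall>ks. \<forall>x\<in>U. pds ks f differentiable (at x))"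

definition xi :: "4 \<Rightarrow> real" where
  "xi mu = (if mu = 0 then -1 else 1)"

definition eta :: "real^4^4" where
  "eta = (\<chi> i j. if i = j then xi i else 0)"

definition ginv :: "(real^4 \<Rightarrow> real^4^4) \<Rightarrow> real^4 \<Rightarrow> real^4^4" where
  "ginv g x = matrix_inv (g x)"

definition sqrtg :: "(real^4 \<Rightarrow> real^4^4) \<Rightarrow> real^4 \<Rightarrow> real" where
  "sqrtg g x = sqrt \<bar>det (g x)\<bar>"

definition Chr :: "(real^4 \<Rightarrow> real^4^4) \<Rightarrow> 4 \<Rightarrow> 4 \<Rightarrow> 4 \<Rightarrow> real^4 \<Rightarrow> real" where
  "Chr g l m n x = (1/2) * (\<Sum>r\<in>UNIV. ginv g x $ l $ r *
      (pd m (\<lambda>y. g y $ r $ n) x + pd n (\<lambda>y. g y $ r $ m) x - pd r (\<lambda>y. g y $ m $ n) x))"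

definition Ricci :: "(real^4 \<Rightarrow> real^4^4) \<Rightarrow> 4 \<Rightarrow> 4 \<Rightarrow> real^4 \<Rightarrow> real" where
  "Ricci g m n x = (\<Sum>l\<in>UNIV. pd l (Chr g l m n) x) - (\<Sum>l\<in>UNIV. pd n (Chr g l m l) x)
     + (\<Sum>l\<in>UNIV. \<Sum>s\<in>UNIV. Chr g l l s x * Chr g s m n x - Chr g l n s x * Chr g s m l x)"

definition Rscal :: "(real^4 \<Rightarrow> real^4^4) \<Rightarrow> real^4 \<Rightarrow> real" where
  "Rscal g x = (\<Sum>m\<in>UNIV. \<Sum>n\<in>UNIV. ginv g x $ m $ n * Ricci g m n x)"

definition nvec :: "(real^4 \<Rightarrow> real^4^4) \<Rightarrow> 4 \<Rightarrow> 4 \<Rightarrow> real^4 \<Rightarrow> real" where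
  "nvec g mu nu x = xi mu * ginv g x $ mu $ nu / sqrt \<bar>ginv g x $ mu $ mu\<bar>"

definition subdet :: "real^4^4 \<Rightarrow> 4 set \<Rightarrow> real" where
  "subdet A S = (\<Sum>p\<in>{p. p permutes S}. of_int (sign p) * (\<Prod>i\<in>S. A $ i $ p i))"

definition gam1 :: "(real^4 \<Rightarrow> real^4^4) \<Rightarrow> 4 \<Rightarrow> real^4 \<Rightarrow> real" where
  "gam1 g mu x = subdet (g x) (- {mu})"

definition gam1inv :: "(real^4 \<Rightarrow> real^4^4) \<Rightarrow> 4 \<Rightarrow> 4 \<Rightarrow> 4 \<Rightarrow> real^4 \<Rightarrow> real" where
  "gam1inv g mu a b x = ginv g x $ a $ b - ginv g x $ a $ mu * ginv g x $ mu $ b / ginv g x $ mu $ mu"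

definition Kab :: "(real^4 \<Rightarrow> real^4^4) \<Rightarrow> 4 \<Rightarrow> 4 \<Rightarrow> 4 \<Rightarrow> real^4 \<Rightarrow> real" where
  "Kab g mu a b x = - Chr g mu a b x / sqrt \<bar>ginv g x $ mu $ mu\<bar>"

definition Ktr :: "(real^4 \<Rightarrow> real^4^4) \<Rightarrow> 4 \<Rightarrow> real^4 \<Rightarrow> real" where
  "Ktr g mu x = (\<Sum>a\<in>-{mu}. \<Sum>b\<in>-{mu}. gam1inv g mu a b x * Kab g mu a b x)"

definition gam2 :: "(real^4 \<Rightarrow> real^4^4) \<Rightarrow> 4 \<Rightarrow> 4 \<Rightarrow> real^4 \<Rightarrow> real" where
  "gam2 g mu nu x = subdet (g x) (- {mu, nu})"

definition qq :: "(real^4 \<Rightarrow> real^4^4) \<Rightarrow> 4 \<Rightarrow> 4 \<Rightarrow> real^4 \<Rightarrow> real" where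
  "qq g mu nu x = ginv g x $ mu $ nu /
      sqrt (xi mu * xi nu * ginv g x $ mu $ mu * ginv g x $ nu $ nu)"

definition alpha :: "(real^4 \<Rightarrow> real^4^4) \<Rightarrow> 4 \<Rightarrow> 4 \<Rightarrow> real^4 \<Rightarrow> real" where
  "alpha g mu nu x = (if mu = 0 \<or> nu = 0 then arsinh (qq g mu nu x) else arcsin (qq g mu nu x))"

definition LK :: "(real^4 \<Rightarrow> real^4^4) \<Rightarrow> real^4 \<Rightarrow> real" where
  "LK g x = sqrtg g x * Rscal g x
     + 2 * (\<Sum>mu\<in>UNIV. pd mu (\<lambda>y. sqrt \<bar>gam1 g mu y\<bar> * Ktr g mu y) x)
     - (\<Sum>mu\<in>UNIV. \<Sum>nu\<in>-{mu}. pd mu (pd nu (\<lambda>y. sqrt \<bar>gam2 g mu nu y\<bar> * alpha g mu nu y)) x)"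

definition LGamma :: "(real^4 \<Rightarrow> real^4^4) \<Rightarrow> real^4 \<Rightarrow> real" where
  "LGamma g x = sqrtg g x * (\<Sum>mu\<in>UNIV. \<Sum>nu\<in>UNIV. ginv g x $ mu $ nu *
      (\<Sum>rho\<in>UNIV. \<Sum>sig\<in>UNIV. Chr g rho mu sig x * Chr g sig rho nu x
                                   - Chr g rho mu nu x * Chr g sig rho sig x))"

end

theory Submission
  imports Defs
begin

lemma line_has_derivative:
  "((\<lambda>t::real. x + t *\<^sub>R (v::real^4)) has_derivative (\<lambda>t. t *\<^sub>R v)) (at 0)"
  by (auto intro!: derivative_eq_intros)

lemma pd_line_deriv:
  fixes f :: "real^4 \<Rightarrow> real"
  assumes "(f has_derivative f') (at x)"
  shows "((\<lambda>t. f (x + t *\<^sub>R axis i 1)) has_real_derivative f' (axis i 1)) (at 0)"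
proof -
  have f0: "(f has_derivative f') (at (x + 0 *\<^sub>R axis i 1))" using assms by simp
  have "((\<lambda>t. f (x + t *\<^sub>R axis i 1)) has_derivative (\<lambda>t. f' (t *\<^sub>R axis i 1))) (at 0)"
    using has_derivative_compose[OF line_has_derivative[of x "axis i (1::real)"], of f f'] f0 by simp
  moreover have "(\<lambda>t. f' (t *\<^sub>R axis i 1)) = (\<lambda>t. f' (axis i 1) * t)"
    using has_derivative_bounded_linear[OF assms]
    by (metis bounded_linear.linear linear.scaleR real_scaleR_def mult.commute)
  ultimately show ?thesis by (simp add: has_field_derivative_def)
qed

lemma pd_has_derivative:
  fixes f :: "real^4 \<Rightarrow> real"
  assumes "(f has_derivative f') (at x)"
  shows "pd i f x = f' (axis i 1)"
  unfolding pd_def using pd_line_deriv[OF assms] by (rule DERIV_imp_deriv)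

lemma pd_local:
  assumes "open U" "x \<in> U" "\<And>y. y \<in> U \<Longrightarrow> f y = h y"
  shows "pd i f x = pd i h x"
  unfolding pd_def
proof (rule deriv_cong_ev[OF _ refl])
  have "continuous (at 0) (\<lambda>t::real. x + t *\<^sub>R axis i 1)" by (intro continuous_intros)
  hence "((\<lambda>t::real. x + t *\<^sub>R axis i 1) \<longlongrightarrow> x) (at 0)"
    by (simp add: continuous_at)
  hence "\<forall>\<^sub>F t in at 0. x + t *\<^sub>R axis i 1 \<in> U"
    using assms(1,2) by (simp add: tendsto_def)
  hence "\<forall>\<^sub>F t in nhds 0. t \<noteq> 0 \<longrightarrow> x + t *\<^sub>R axis i 1 \<in> U"
    by (simp add: eventually_at_filter)
  hence "\<forall>\<^sub>F t in nhds 0. x + t *\<^sub>R axis i 1 \<in> U"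
    by eventually_elim (use assms(2) in auto)
  then show "\<forall>\<^sub>F t in nhds 0. f (x + t *\<^sub>R axis i 1) = h (x + t *\<^sub>R axis i 1)"
    by eventually_elim (use assms(3) in auto)
qed

lemma pds_append: "pds (ks @ [i]) f = pds ks (pd i f)"
  by (induction ks) auto

definition smn :: "(real^4) set \<Rightarrow> nat \<Rightarrow> (real^4 \<Rightarrow> real) \<Rightarrow> bool" where
  "smn U n f \<longleftrightarrow> (\<forall>ks. length ks \<le> n \<longrightarrow> (\<forall>x\<in>U. pds ks f differentiable (at x)))"

lemma smooth_on4_smn: "smooth_on4 U f \<longleftrightarrow> (\<forall>n. smn U n f)"
  unfolding smooth_on4_def smn_def by auto

lemma smn_0: "smn U 0 f \<longleftrightarrow> (\<forall>x\<in>U. f differentiable (at x))"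
  unfolding smn_def by auto

lemma smn_Suc: "smn U (Suc n) f \<longleftrightarrow> (\<forall>x\<in>U. f differentiable (at x)) \<and> (\<forall>i. smn U n (pd i f))"
proof
  assume a: "smn U (Suc n) f"
  show "(\<forall>x\<in>U. f differentiable (at x)) \<and> (\<forall>i. smn U n (pd i f))"
  proof (intro conjI allI)
    show "\<forall>x\<in>U. f differentiable (at x)" using a unfolding smn_def
      by (metis le0 list.size(3) pds.simps(1))
    fix i show "smn U n (pd i f)" unfolding smn_def
    proof (intro allI impI)
      fix ks :: "4 list" assume "length ks \<le> n"
      then show "\<forall>x\<in>U. pds ks (pd i f) differentiable (at x)"
        using a unfolding smn_def pds_append[symmetric] by (metis Suc_le_mono length_append_singleton)
    qed
  qed
next
  assume a: "(\<forall>x\<in>U. f differentiable (at x)) \<and> (\<forall>i. smn U n (pd i f))"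
  show "smn U (Suc n) f" unfolding smn_def
  proof (intro allI impI)
    fix ks :: "4 list" assume l: "length ks \<le> Suc n"
    show "\<forall>x\<in>U. pds ks f differentiable (at x)"
    proof (cases ks rule: rev_exhaust)
      case Nil then show ?thesis using a by simp
    next
      case (snoc ys i)
      then show ?thesis using a l unfolding smn_def by (simp add: pds_append)
    qed
  qed
qed

lemma smn_mono: "smn U n f \<Longrightarrow> m \<le> n \<Longrightarrow> smn U m f"
  unfolding smn_def by auto

lemma smn_diffble: "smn U n f \<Longrightarrow> x \<in> U \<Longrightarrow> f differentiable (at x)"
  unfolding smn_def by (metis le0 list.size(3) pds.simps(1))

lemma smooth_smn: "smooth_on4 U f \<Longrightarrow> smn U n f"
  by (simp add: smooth_on4_smn)

lemma pds_local:
  assumes "open U" "\<And>y. y \<in> U \<Longrightarrow> f y = h y" "y \<in> U"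
  shows "pds ks f y = pds ks h y"
  using assms(3)
proof (induction ks arbitrary: y)
  case Nil then show ?case using assms(2) by simp
next
  case (Cons k ks) then show ?case using pd_local[OF assms(1) Cons(2), of "pds ks f" "pds ks h"] by simp
qed

lemma diffble_local:
  assumes "open U" "x \<in> U" "f differentiable (at x)" "\<And>y. y \<in> U \<Longrightarrow> f y = h y"
  shows "h differentiable (at x)"
  using assms has_derivative_transform_within_open unfolding differentiable_def by blast

lemma smn_local:
  assumes "open U" "smn U n f" "\<And>y. y \<in> U \<Longrightarrow> f y = h y"
  shows "smn U n h"
  unfolding smn_def
proof (intro allI impI ballI)
  fix ks :: "4 list" and x assume "length ks \<le> n" "x \<in> U"
  then have "pds ks f differentiable (at x)" using assms(2) unfolding smn_def by auto
  then show "pds ks h differentiable (at x)"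
    using diffble_local[OF assms(1) \<open>x \<in> U\<close>, of "pds ks f" "pds ks h"] pds_local[OF assms(1,3)] by auto
qed

lemma smooth_local:
  assumes "open U" "smooth_on4 U f" "\<And>y. y \<in> U \<Longrightarrow> f y = h y"
  shows "smooth_on4 U h"
  using assms smn_local[OF assms(1) _ assms(3)] by (auto simp: smooth_on4_smn)

lemma pd_diff_eq:
  fixes f :: "real^4 \<Rightarrow> real"
  assumes "f differentiable (at x)"
  shows "((\<lambda>t. f (x + t *\<^sub>R axis i 1)) has_real_derivative pd i f x) (at 0)"
proof -
  obtain f' where f': "(f has_derivative f') (at x)" using assms unfolding differentiable_def by blast
  show ?thesis using pd_line_deriv[OF f'] pd_has_derivative[OF f'] by simp
qed

lemma pd_eqI:
  "((\<lambda>t. f (x + t *\<^sub>R axis i 1)) has_real_derivative D) (at 0) \<Longrightarrow> pd i f x = D"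
  unfolding pd_def by (rule DERIV_imp_deriv)

lemma pd_add:
  fixes f h :: "real^4 \<Rightarrow> real"
  assumes "f differentiable (at x)" "h differentiable (at x)"
  shows "pd i (\<lambda>y. f y + h y) x = pd i f x + pd i h x"
  by (rule pd_eqI, rule DERIV_add[OF pd_diff_eq[OF assms(1)] pd_diff_eq[OF assms(2)]])

lemma pd_diff:
  fixes f h :: "real^4 \<Rightarrow> real"
  assumes "f differentiable (at x)" "h differentiable (at x)"
  shows "pd i (\<lambda>y. f y - h y) x = pd i f x - pd i h x"
  by (rule pd_eqI, rule DERIV_diff[OF pd_diff_eq[OF assms(1)] pd_diff_eq[OF assms(2)]])

lemma pd_mult:
  fixes f h :: "real^4 \<Rightarrow> real"
  assumes "f differentiable (at x)" "h differentiable (at x)"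
  shows "pd i (\<lambda>y. f y * h y) x = pd i f x * h x + f x * pd i h x"
proof (rule pd_eqI)
  have "((\<lambda>t. f (x + t *\<^sub>R axis i 1) * h (x + t *\<^sub>R axis i 1)) has_real_derivative
     pd i f x * h (x + 0 *\<^sub>R axis i 1) + pd i h x * f (x + 0 *\<^sub>R axis i 1)) (at 0)"
    by (rule DERIV_mult[OF pd_diff_eq[OF assms(1)] pd_diff_eq[OF assms(2)]])
  then show "((\<lambda>t. f (x + t *\<^sub>R axis i 1) * h (x + t *\<^sub>R axis i 1)) has_real_derivative
     pd i f x * h x + f x * pd i h x) (at 0)" by (simp add: mult.commute)
qed

lemma pd_const: "pd i (\<lambda>y. c) x = 0"
  by (rule pd_eqI) simp

lemma pd_cmult:
  fixes f :: "real^4 \<Rightarrow> real"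
  assumes "f differentiable (at x)"
  shows "pd i (\<lambda>y. c * f y) x = c * pd i f x"
  by (rule pd_eqI, rule DERIV_cmult[OF pd_diff_eq[OF assms(1)]])

lemma pd_comp:
  fixes f :: "real^4 \<Rightarrow> real"
  assumes "f differentiable (at x)" "(\<phi> has_real_derivative D) (at (f x))"
  shows "pd i (\<lambda>y. \<phi> (f y)) x = D * pd i f x"
proof (rule pd_eqI)
  have "(\<phi> has_real_derivative D) (at (f (x + 0 *\<^sub>R axis i 1)))" using assms(2) by simp
  from DERIV_chain2[OF this pd_diff_eq[OF assms(1)]]
  show "((\<lambda>t. \<phi> (f (x + t *\<^sub>R axis i 1))) has_real_derivative D * pd i f x) (at 0)" .
qed

lemma pd_sum:
  fixes f :: "'a \<Rightarrow> real^4 \<Rightarrow> real"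
  assumes "finite A" "\<And>a. a \<in> A \<Longrightarrow> f a differentiable (at x)"
  shows "pd i (\<lambda>y. \<Sum>a\<in>A. f a y) x = (\<Sum>a\<in>A. pd i (f a) x)"
  by (rule pd_eqI, rule DERIV_sum) (use assms pd_diff_eq in auto)

lemma smn_const: "smn U n (\<lambda>y. c)"
proof (induction n arbitrary: c)
  case 0 then show ?case by (simp add: smn_0)
next
  case (Suc n)
  have "pd i (\<lambda>y. c) = (\<lambda>y. 0)" for i by (rule ext) (simp add: pd_const)
  then show ?case using Suc by (simp add: smn_Suc)
qed

lemma smn_add:
  assumes "open U" "smn U n f" "smn U n h"
  shows "smn U n (\<lambda>y. f y + h y)"
  using assms(2,3)
proof (induction n arbitrary: f h)
  case 0 then show ?case by (simp add: smn_0)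
next
  case (Suc n)
  show ?case unfolding smn_Suc
  proof (intro conjI allI ballI)
    fix x assume "x \<in> U" then show "(\<lambda>y. f y + h y) differentiable (at x)"
      using Suc.prems smn_diffble by auto
  next
    fix i
    have "smn U n (\<lambda>y. pd i f y + pd i h y)" using Suc by (simp add: smn_Suc)
    then show "smn U n (pd i (\<lambda>y. f y + h y))"
      by (rule smn_local[OF assms(1)]) (simp add: pd_add smn_diffble[OF Suc.prems(1)] smn_diffble[OF Suc.prems(2)])
  qed
qed

lemma smn_cmult:
  assumes "open U" "smn U n f"
  shows "smn U n (\<lambda>y. c * f y)"
  using assms(2)
proof (induction n arbitrary: f)
  case 0 then show ?case by (simp add: smn_0)
next
  case (Suc n)
  show ?case unfolding smn_Suc
  proof (intro conjI allI ballI)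
    fix x assume "x \<in> U" then show "(\<lambda>y. c * f y) differentiable (at x)"
      using Suc.prems smn_diffble by auto
  next
    fix i
    have "smn U n (\<lambda>y. c * pd i f y)" using Suc by (simp add: smn_Suc)
    then show "smn U n (pd i (\<lambda>y. c * f y))"
      by (rule smn_local[OF assms(1)]) (simp add: pd_cmult smn_diffble[OF Suc.prems(1)])
  qed
qed

lemma smn_uminus:
  assumes "open U" "smn U n f"
  shows "smn U n (\<lambda>y. - f y)"
  using smn_cmult[OF assms, of "-1"] by simp

lemma smn_diff:
  assumes "open U" "smn U n f" "smn U n h"
  shows "smn U n (\<lambda>y. f y - h y)"
  using smn_add[OF assms(1,2) smn_uminus[OF assms(1,3)]] by simp

lemma smn_mult:
  assumes "open U" "smn U n f" "smn U n h"
  shows "smn U n (\<lambda>y. f y * h y)"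
  using assms(2,3)
proof (induction n arbitrary: f h)
  case 0 then show ?case by (simp add: smn_0)
next
  case (Suc n)
  show ?case unfolding smn_Suc
  proof (intro conjI allI ballI)
    fix x assume "x \<in> U" then show "(\<lambda>y. f y * h y) differentiable (at x)"
      using Suc.prems smn_diffble by auto
  next
    fix i
    have a: "smn U n (\<lambda>y. pd i f y * h y)"
      using Suc by (meson smn_Suc smn_mono le_SucI order_refl)
    have b: "smn U n (\<lambda>y. f y * pd i h y)"
      using Suc by (meson smn_Suc smn_mono le_SucI order_refl)
    have "smn U n (\<lambda>y. pd i f y * h y + f y * pd i h y)" by (rule smn_add[OF assms(1) a b])
    then show "smn U n (pd i (\<lambda>y. f y * h y))"
      by (rule smn_local[OF assms(1)]) (simp add: pd_mult smn_diffble[OF Suc.prems(1)] smn_diffble[OF Suc.prems(2)])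
  qed
qed


lemma smn_sum:
  assumes "open U" "finite A" "\<And>a. a \<in> A \<Longrightarrow> smn U n (f a)"
  shows "smn U n (\<lambda>y. \<Sum>a\<in>A. f a y)"
  using assms(2,3)
proof (induction A rule: finite_induct)
  case empty then show ?case by (simp add: smn_const)
next
  case (insert a A) then show ?case by (simp add: smn_add[OF assms(1)])
qed

lemma smn_prod:
  assumes "open U" "finite A" "\<And>a. a \<in> A \<Longrightarrow> smn U n (f a)"
  shows "smn U n (\<lambda>y. \<Prod>a\<in>A. f a y)"
  using assms(2,3)
proof (induction A rule: finite_induct)
  case empty then show ?case by (simp add: smn_const)
next
  case (insert a A) then show ?case by (simp add: smn_mult[OF assms(1)])
qed


lemma smn_comp_Suc:
  assumes "open U" "\<And>y. y \<in> U \<Longrightarrow> f y \<in> S"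
    "\<And>t. t \<in> S \<Longrightarrow> (\<phi> has_real_derivative \<phi>' t) (at t)"
    "smn U (Suc n) f" "smn U n (\<lambda>y. \<phi>' (f y))"
  shows "smn U (Suc n) (\<lambda>y. \<phi> (f y))"
  unfolding smn_Suc
proof (intro conjI allI ballI)
  fix x assume x: "x \<in> U"
  have "(\<phi> has_derivative (*) (\<phi>' (f x))) (at (f x))"
    using assms(3)[OF assms(2)[OF x]] by (simp add: has_field_derivative_def)
  then have "\<phi> differentiable (at (f x))" unfolding differentiable_def by blast
  then show "(\<lambda>y. \<phi> (f y)) differentiable (at x)"
    using differentiable_compose smn_diffble[OF assms(4) x] by blast
next
  fix i
  have "smn U n (pd i f)" using assms(4) by (simp add: smn_Suc)
  then have "smn U n (\<lambda>y. \<phi>' (f y) * pd i f y)" by (rule smn_mult[OF assms(1) assms(5)])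
  then show "smn U n (pd i (\<lambda>y. \<phi> (f y)))"
    by (rule smn_local[OF assms(1)])
      (simp add: pd_comp[OF smn_diffble[OF assms(4)] assms(3)[OF assms(2)]])
qed


lemma smn_comp0:
  assumes "\<And>y. y \<in> U \<Longrightarrow> f y \<in> S"
    "\<And>t. t \<in> S \<Longrightarrow> (\<phi> has_real_derivative \<phi>' t) (at t)"
    "smn U 0 f"
  shows "smn U 0 (\<lambda>y. \<phi> (f y))"
  unfolding smn_0
proof
  fix x assume x: "x \<in> U"
  have "(\<phi> has_derivative (*) (\<phi>' (f x))) (at (f x))"
    using assms(2)[OF assms(1)[OF x]] by (simp add: has_field_derivative_def)
  then have "\<phi> differentiable (at (f x))" unfolding differentiable_def by blast
  then show "(\<lambda>y. \<phi> (f y)) differentiable (at x)"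
    using differentiable_compose smn_diffble[OF assms(3) x] by blast
qed


lemma smn_powr:
  assumes "open U" "smn U n f" "\<And>y. y \<in> U \<Longrightarrow> f y > 0"
  shows "smn U n (\<lambda>y. f y powr a)"
  using assms(2)
proof (induction n arbitrary: a)
  case 0
  have d: "\<And>t. t \<in> {0<..} \<Longrightarrow> ((\<lambda>z. z powr a) has_real_derivative a * t powr (a - 1)) (at t)"
    using has_real_derivative_powr by auto
  have i: "\<And>y. y \<in> U \<Longrightarrow> f y \<in> {0<..}" using assms(3) by auto
  show ?case using smn_comp0[OF i d 0] .
next
  case (Suc n)
  have d: "\<And>t. t \<in> {0<..} \<Longrightarrow> ((\<lambda>z. z powr a) has_real_derivative a * t powr (a - 1)) (at t)"
    using has_real_derivative_powr by auto
  have i: "\<And>y. y \<in> U \<Longrightarrow> f y \<in> {0<..}" using assms(3) by auto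
  have "smn U n f" using smn_mono[OF Suc.prems] by simp
  then have "smn U n (\<lambda>y. f y powr (a - 1))" by (rule Suc.IH)
  then have "smn U n (\<lambda>y. a * f y powr (a - 1))" by (rule smn_cmult[OF assms(1)])
  then show ?case using smn_comp_Suc[OF assms(1) i d Suc.prems] by simp
qed


lemma smooth_const: "smooth_on4 U (\<lambda>y. c)"
  by (simp add: smooth_on4_smn smn_const)
lemma smooth_add: "open U \<Longrightarrow> smooth_on4 U f \<Longrightarrow> smooth_on4 U h \<Longrightarrow> smooth_on4 U (\<lambda>y. f y + h y)"
  by (simp add: smooth_on4_smn smn_add)
lemma smooth_diff: "open U \<Longrightarrow> smooth_on4 U f \<Longrightarrow> smooth_on4 U h \<Longrightarrow> smooth_on4 U (\<lambda>y. f y - h y)"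
  by (simp add: smooth_on4_smn smn_diff)
lemma smooth_mult: "open U \<Longrightarrow> smooth_on4 U f \<Longrightarrow> smooth_on4 U h \<Longrightarrow> smooth_on4 U (\<lambda>y. f y * h y)"
  by (simp add: smooth_on4_smn smn_mult)
lemma smooth_cmult: "open U \<Longrightarrow> smooth_on4 U f \<Longrightarrow> smooth_on4 U (\<lambda>y. c * f y)"
  by (simp add: smooth_on4_smn smn_cmult)
lemma smooth_uminus: "open U \<Longrightarrow> smooth_on4 U f \<Longrightarrow> smooth_on4 U (\<lambda>y. - f y)"
  by (simp add: smooth_on4_smn smn_uminus)
lemma smooth_sum: "open U \<Longrightarrow> finite A \<Longrightarrow> (\<And>a. a \<in> A \<Longrightarrow> smooth_on4 U (f a)) \<Longrightarrow> smooth_on4 U (\<lambda>y. \<Sum>a\<in>A. f a y)"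
  by (simp add: smooth_on4_smn smn_sum)
lemma smooth_prod: "open U \<Longrightarrow> finite A \<Longrightarrow> (\<And>a. a \<in> A \<Longrightarrow> smooth_on4 U (f a)) \<Longrightarrow> smooth_on4 U (\<lambda>y. \<Prod>a\<in>A. f a y)"
  by (simp add: smooth_on4_smn smn_prod)
lemma smooth_powr: "open U \<Longrightarrow> smooth_on4 U f \<Longrightarrow> (\<And>y. y \<in> U \<Longrightarrow> f y > 0) \<Longrightarrow> smooth_on4 U (\<lambda>y. f y powr a)"
  by (simp add: smooth_on4_smn smn_powr)
lemma smooth_pd: "smooth_on4 U f \<Longrightarrow> smooth_on4 U (pd i f)"
  unfolding smooth_on4_smn
proof
  fix n assume "\<forall>n. smn U n f"
  then have "smn U (Suc n) f" by simp
  then show "smn U n (pd i f)" unfolding smn_Suc by simp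
qed
lemma smooth_diffble: "smooth_on4 U f \<Longrightarrow> x \<in> U \<Longrightarrow> f differentiable (at x)"
  using smooth_smn[of U f 0] smn_diffble[of U 0 f x] by simp

lemma smooth_comp:
  assumes "open U" "\<And>y. y \<in> U \<Longrightarrow> f y \<in> S"
    "\<And>t. t \<in> S \<Longrightarrow> (\<phi> has_real_derivative \<phi>' t) (at t)"
    "smooth_on4 U f" "smooth_on4 U (\<lambda>y. \<phi>' (f y))"
  shows "smooth_on4 U (\<lambda>y. \<phi> (f y))"
  unfolding smooth_on4_smn
proof
  fix n show "smn U n (\<lambda>y. \<phi> (f y))"
  proof (cases n)
    case 0 then show ?thesis using smn_comp0[OF assms(2,3) smooth_smn[OF assms(4)]] by simp
  next
    case (Suc m) then show ?thesis
      using smn_comp_Suc[OF assms(1,2,3) smooth_smn[OF assms(4)] smooth_smn[OF assms(5)]] by simp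
  qed
qed


lemma smooth_inverse_pos:
  assumes "open U" "smooth_on4 U f" "\<And>y. y \<in> U \<Longrightarrow> f y > 0"
  shows "smooth_on4 U (\<lambda>y. inverse (f y))"
proof (rule smooth_local[OF assms(1) smooth_powr[OF assms(1,2,3), of "-1"]])
  fix y assume "y \<in> U" then have "f y > 0" by (rule assms(3))
  then show "f y powr -1 = inverse (f y)" by (simp add: powr_neg_one divide_inverse)
qed

lemma smooth_inverse:
  assumes "open U" "smooth_on4 U f" "\<And>y. y \<in> U \<Longrightarrow> f y \<noteq> 0"
  shows "smooth_on4 U (\<lambda>y. inverse (f y))"
proof -
  have sq: "y \<in> U \<Longrightarrow> f y * f y > 0" for y using assms(3)[of y] not_real_square_gt_zero by blast
  have "smooth_on4 U (\<lambda>y. f y * inverse (f y * f y))"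
    using assms sq by (intro smooth_mult smooth_inverse_pos) auto
  then show ?thesis by (rule smooth_local[OF assms(1)]) (use assms(3) in auto)
qed

lemma smooth_divide:
  assumes "open U" "smooth_on4 U f" "smooth_on4 U h" "\<And>y. y \<in> U \<Longrightarrow> h y \<noteq> 0"
  shows "smooth_on4 U (\<lambda>y. f y / h y)"
  using smooth_mult[OF assms(1,2) smooth_inverse[OF assms(1,3,4)]] by (simp add: divide_inverse)

lemma smooth_sqrt:
  assumes "open U" "smooth_on4 U f" "\<And>y. y \<in> U \<Longrightarrow> f y > 0"
  shows "smooth_on4 U (\<lambda>y. sqrt (f y))"
proof (rule smooth_local[OF assms(1) smooth_powr[OF assms(1,2,3), of "1/2"]])
  fix y assume "y \<in> U" then have "f y > 0" by (rule assms(3))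
  then show "f y powr (1/2) = sqrt (f y)" by (simp add: powr_half_sqrt)
qed

lemma smooth_sqrt_abs:
  assumes "open U" "smooth_on4 U f" "\<And>y. y \<in> U \<Longrightarrow> f y \<noteq> 0"
  shows "smooth_on4 U (\<lambda>y. sqrt \<bar>f y\<bar>)"
proof -
  have sq: "y \<in> U \<Longrightarrow> f y * f y > 0" for y using assms(3)[of y] not_real_square_gt_zero by blast
  have "smooth_on4 U (\<lambda>y. sqrt (sqrt (f y * f y)))"
    using assms sq by (intro smooth_sqrt smooth_mult) auto
  then show ?thesis by (rule smooth_local[OF assms(1)]) (simp add: real_sqrt_mult)
qed

lemma smooth_abs:
  assumes "open U" "smooth_on4 U f" "\<And>y. y \<in> U \<Longrightarrow> f y \<noteq> 0"
  shows "smooth_on4 U (\<lambda>y. \<bar>f y\<bar>)"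
proof -
  have sq: "y \<in> U \<Longrightarrow> f y * f y > 0" for y using assms(3)[of y] not_real_square_gt_zero by blast
  have "smooth_on4 U (\<lambda>y. sqrt (f y * f y))"
    using assms sq by (intro smooth_sqrt smooth_mult) auto
  then show ?thesis by (rule smooth_local[OF assms(1)]) (simp)
qed

lemma smooth_arcsin:
  assumes "open U" "smooth_on4 U f" "\<And>y. y \<in> U \<Longrightarrow> \<bar>f y\<bar> < 1"
  shows "smooth_on4 U (\<lambda>y. arcsin (f y))"
proof (rule smooth_comp[OF assms(1) _ _ assms(2), where S="{-1<..<1}"])
  show "\<And>y. y \<in> U \<Longrightarrow> f y \<in> {- 1<..<1}" using assms(3) by (auto simp: abs_less_iff)
  show "\<And>t. t \<in> {- 1<..<1} \<Longrightarrow> (arcsin has_real_derivative inverse (sqrt (1 - t\<^sup>2))) (at t)"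
    using DERIV_arcsin by auto
  have p: "y \<in> U \<Longrightarrow> 1 - f y * f y > 0" for y using assms(3)[of y]
    by (simp add: abs_square_less_1 power2_eq_square[symmetric])
  have "smooth_on4 U (\<lambda>y. 1 - f y * f y)"
    by (intro smooth_diff smooth_mult smooth_const assms(1,2))
  then have "smooth_on4 U (\<lambda>y. inverse (sqrt (1 - f y * f y)))"
    using p by (intro smooth_inverse_pos smooth_sqrt assms(1)) auto
  then show "smooth_on4 U (\<lambda>y. inverse (sqrt (1 - (f y)\<^sup>2)))" by (simp add: power2_eq_square)
qed

lemma smooth_arsinh:
  assumes "open U" "smooth_on4 U f"
  shows "smooth_on4 U (\<lambda>y. arsinh (f y))"
proof (rule smooth_comp[OF assms(1) _ _ assms(2), where S="UNIV"])
  show "\<And>t. t \<in> UNIV \<Longrightarrow> (arsinh has_real_derivative 1 / (sqrt (t ^ 2 + 1))) (at t)"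
    using arsinh_real_has_field_derivative by auto
  have p: "f y * f y + 1 > 0" for y by (simp add: add_nonneg_pos)
  have "smooth_on4 U (\<lambda>y. f y * f y + 1)"
    by (intro smooth_add smooth_mult smooth_const assms(1,2))
  then have "smooth_on4 U (\<lambda>y. inverse (sqrt (f y * f y + 1)))"
    using p by (intro smooth_inverse_pos smooth_sqrt assms(1)) auto
  then show "smooth_on4 U (\<lambda>y. 1 / sqrt ((f y)\<^sup>2 + 1))" by (simp add: divide_inverse power2_eq_square)
qed auto

lemma subdet_cong:
  assumes "\<And>i j. i \<in> S \<Longrightarrow> A $ i $ j = A' $ i $ j"
  shows "subdet A S = subdet A' S"
  unfolding subdet_def by (intro sum.cong refl) (simp add: assms)

lemma det_rows_identity:
  fixes A :: "real^4^4"
  assumes "\<And>i j. i \<in> T \<Longrightarrow> A $ i $ j = (if i = j then 1 else 0)"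
  shows "det A = subdet A (- T)"
proof -
  let ?f = "\<lambda>p. of_int (sign p) * prod (\<lambda>i. A$i$p i) (UNIV :: 4 set)"
  have sub: "{p. p permutes (- T)} \<subseteq> {p. p permutes (UNIV :: 4 set)}"
    using permutes_subset by blast
  have z: "?f p = 0" if "p \<in> {p. p permutes (UNIV :: 4 set)} - {p. p permutes (- T)}" for p
  proof -
    from that have pu: "p permutes UNIV" and np: "\<not> p permutes (- T)" by auto
    have "\<exists>i\<in>T. p i \<noteq> i"
    proof (rule ccontr)
      assume "\<not> (\<exists>i\<in>T. p i \<noteq> i)"
      then have "\<forall>x. x \<notin> - T \<longrightarrow> p x = x" by auto
      with pu have "p permutes (- T)" unfolding permutes_def by auto
      with np show False by simp
    qed
    then obtain i where "i \<in> T" "p i \<noteq> i" by blast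
    then have "A $ i $ p i = 0" using assms by simp
    then have "prod (\<lambda>i. A$i$p i) UNIV = 0" by (intro prod_zero) auto
    then show ?thesis by simp
  qed
  have fin: "finite {p. p permutes (UNIV :: 4 set)}" by (simp add: finite_permutations)
  have "det A = sum ?f {p. p permutes (- T)}"
    unfolding det_def by (rule sum.mono_neutral_right[OF fin sub]) (use z in blast)
  also have "\<dots> = subdet A (- T)"
    unfolding subdet_def
  proof (intro sum.cong refl)
    fix p assume "p \<in> {p. p permutes (- T)}"
    then have pT: "\<And>i. i \<in> T \<Longrightarrow> p i = i" unfolding permutes_def by auto
    have "prod (\<lambda>i. A$i$p i) (UNIV :: 4 set) = prod (\<lambda>i. A$i$p i) (- T) * prod (\<lambda>i. A$i$p i) T"
      using prod.subset_diff[of T "UNIV :: 4 set" "\<lambda>i. A$i$p i"] by (simp add: Compl_eq_Diff_UNIV)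
    also have "prod (\<lambda>i. A$i$p i) T = 1" using pT assms by (intro prod.neutral) auto
    finally show "?f p = of_int (sign p) * (\<Prod>i\<in>- T. A $ i $ p i)" by simp
  qed
  finally show ?thesis .
qed

lemma subdet_sing: "subdet A {a} = A $ a $ a"
proof -
  have "{p. p permutes {a}} = {id}" by auto
  then show ?thesis unfolding subdet_def by simp
qed

lemma subdet_two:
  assumes "a \<noteq> b"
  shows "subdet A {a, b} = A $ a $ a * A $ b $ b - A $ a $ b * A $ b $ a"
proof -
  let ?t = "Transposition.transpose a b"
  have e: "{p. p permutes {a, b}} = {id, ?t}"
    by (simp add: permutes_doubleton_iff set_eq_iff)
  have ne: "id \<noteq> ?t"
  proof
    assume "id = ?t" then have "id a = ?t a" by simp
    then show False using assms by simp
  qed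
  have s: "sign ?t = -1" using assms by (simp add: sign_swap_id)
  have p1: "(\<Prod>i\<in>{a, b}. A $ i $ id i) = A $ a $ a * A $ b $ b" using assms by simp
  have p2: "(\<Prod>i\<in>{a, b}. A $ i $ ?t i) = A $ a $ b * A $ b $ a" using assms by simp
  have "subdet A {a, b} = of_int (sign (id::4\<Rightarrow>4)) * (\<Prod>i\<in>{a, b}. A $ i $ id i)
      + of_int (sign ?t) * (\<Prod>i\<in>{a, b}. A $ i $ ?t i)"
    unfolding subdet_def e using sum.insert[of "{?t}" id "\<lambda>p. of_int (sign p) * (\<Prod>i\<in>{a, b}. A $ i $ p i)"] ne
    by simp
  then show ?thesis using p1 p2 s by simp
qed

lemma inv_props:
  fixes A :: "real^4^4"
  assumes "invertible A"
  shows "A ** matrix_inv A = mat 1" "matrix_inv A ** A = mat 1"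
proof -
  from assms obtain A' where "A ** A' = mat 1 \<and> A' ** A = mat 1" unfolding invertible_def by blast
  then have "A ** matrix_inv A = mat 1 \<and> matrix_inv A ** A = mat 1"
    unfolding matrix_inv_def by (rule someI)
  then show "A ** matrix_inv A = mat 1" "matrix_inv A ** A = mat 1" by auto
qed

lemma jacobi_minor:
  fixes A :: "real^4^4"
  assumes "invertible A"
  shows "subdet A (- T) = det A * subdet (matrix_inv A) T"
proof -
  let ?B = "matrix_inv A"
  define A' :: "real^4^4" where "A' = (\<chi> i j. if i \<in> T then (if i = j then 1 else 0) else A $ i $ j)"
  define M where "M = A' ** ?B"
  have "M ** A = A' ** (?B ** A)" unfolding M_def by (simp add: matrix_mul_assoc)
  also have "\<dots> = A'" using inv_props[OF assms] by simp
  finally have MA: "M ** A = A'" .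
  have dA': "det A' = subdet A (- T)"
  proof -
    have "det A' = subdet A' (- T)" by (rule det_rows_identity) (simp add: A'_def)
    also have "\<dots> = subdet A (- T)" by (rule subdet_cong) (simp add: A'_def)
    finally show ?thesis .
  qed
  have Mrow_out: "M $ i $ j = (if i = j then 1 else 0)" if "i \<in> - T" for i j
  proof -
    have "M $ i $ j = (A ** ?B) $ i $ j"
      using that unfolding M_def A'_def matrix_matrix_mult_def by simp
    then show ?thesis using inv_props[OF assms] by (simp add: mat_def)
  qed
  have Mrow_in: "M $ i $ j = ?B $ i $ j" if "i \<in> T" for i j
  proof -
    have "M $ i $ j = (\<Sum>k\<in>UNIV. (if i = k then 1 else 0) * ?B $ k $ j)"
      using that unfolding M_def A'_def matrix_matrix_mult_def by simp
    also have "\<dots> = (\<Sum>k\<in>UNIV. if i = k then ?B $ k $ j else 0)" by (intro sum.cong) auto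
    also have "\<dots> = ?B $ i $ j" by simp
    finally show ?thesis .
  qed
  have "det M = subdet M (- (- T))" by (rule det_rows_identity) (use Mrow_out in auto)
  also have "\<dots> = subdet ?B T" by (simp, rule subdet_cong) (use Mrow_in in auto)
  finally have dM: "det M = subdet ?B T" .
  have "subdet A (- T) = det M * det A" using dA' MA det_mul[of M A] by simp
  then show ?thesis using dM by simp
qed

lemma det_eta: "det eta = -1"
proof -
  have p1: "prod (\<lambda>i. eta $ i $ i) (UNIV - {0::4}) = 1"
    by (intro prod.neutral) (simp add: eta_def xi_def)
  have "det eta = prod (\<lambda>i. eta $ i $ i) (UNIV :: 4 set)"
    by (rule det_diagonal) (simp add: eta_def)
  also have "\<dots> = eta $ 0 $ 0 * prod (\<lambda>i. eta $ i $ i) (UNIV - {0})"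
    by (simp add: prod.remove)
  finally show ?thesis using p1 by (simp add: eta_def xi_def)
qed

lemma smooth_det:
  assumes "open U" "\<And>i j. smooth_on4 U (\<lambda>y. M y $ i $ j)"
  shows "smooth_on4 U (\<lambda>y. det (M y :: real^4^4))"
  unfolding det_def
  by (intro smooth_sum smooth_cmult smooth_prod assms finite_permutations) auto

lemma smooth_subdet:
  assumes "open U" "\<And>i j. smooth_on4 U (\<lambda>y. M y $ i $ j)"
  shows "smooth_on4 U (\<lambda>y. subdet (M y :: real^4^4) S)"
  unfolding subdet_def
  by (intro smooth_sum smooth_cmult smooth_prod assms finite_permutations) auto

lemma cramer_entry:
  fixes A :: "real^4^4"
  assumes "det A \<noteq> 0"
  shows "matrix_inv A $ k $ j = det (\<chi> i l. if l = k then (if i = j then 1 else 0) else A $ i $ l) / det A"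
proof -
  have inv: "invertible A" using assms invertible_det_nz by blast
  let ?x = "(\<chi> k. matrix_inv A $ k $ j) :: real^4"
  let ?b = "(\<chi> i. if i = j then 1 else 0) :: real^4"
  have "A *v ?x = ?b"
  proof -
    have "(A *v ?x) $ i = (A ** matrix_inv A) $ i $ j" for i
      by (simp add: matrix_vector_mult_def matrix_matrix_mult_def)
    then show ?thesis using inv_props(1)[OF inv] by (simp add: vec_eq_iff mat_def)
  qed
  then have "?x = (\<chi> k. det(\<chi> i l. if l = k then ?b $ i else A $ i $ l) / det A)"
    using cramer[OF assms] by blast
  then have "?x $ k = det(\<chi> i l. if l = k then ?b $ i else A $ i $ l) / det A" by simp
  then show ?thesis by (simp cong: if_cong)
qed

locale MS =
  fixes g :: "real^4 \<Rightarrow> real^4^4" and U :: "(real^4) set"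
  assumes openU: "open U"
    and gsym: "\<And>x mu nu. x \<in> U \<Longrightarrow> g x $ mu $ nu = g x $ nu $ mu"
    and gsmooth: "\<And>mu nu. smooth_on4 U (\<lambda>y. g y $ mu $ nu)"
    and gsig: "\<And>x. x \<in> U \<Longrightarrow> \<exists>P. invertible P \<and> transpose P ** g x ** P = eta"
    and g00: "\<And>x. x \<in> U \<Longrightarrow> ginv g x $ 0 $ 0 < 0"
    and gii: "\<And>x i. x \<in> U \<Longrightarrow> i \<noteq> 0 \<Longrightarrow> ginv g x $ i $ i > 0"
    and qq1: "\<And>x i j. x \<in> U \<Longrightarrow> i \<noteq> 0 \<Longrightarrow> j \<noteq> 0 \<Longrightarrow> i \<noteq> j \<Longrightarrow> \<bar>qq g i j x\<bar> < 1"
begin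

lemma det_neg: "x \<in> U \<Longrightarrow> det (g x) < 0"
proof -
  assume x: "x \<in> U"
  obtain P where "invertible P" "transpose P ** g x ** P = eta" using gsig[OF x] by blast
  then have "det (transpose P ** g x ** P) = -1"
    using det_eta by simp
  then have "det (transpose P) * det (g x) * det P = -1"
    by (simp only: det_mul)
  then have "det P * det P * det (g x) = -1" by (simp add: algebra_simps)
  moreover have "det P * det P \<ge> 0" by simp
  ultimately show ?thesis
  proof -
    assume a: "det P * det P * det (g x) = -1" "det P * det P \<ge> 0"
    show ?thesis
    proof (rule ccontr)
      assume "\<not> det (g x) < 0"
      then have "det (g x) \<ge> 0" by simp
      then have "det P * det P * det (g x) \<ge> 0" using a(2) by (rule mult_nonneg_nonneg[rotated])
      then show False using a(1) by simp
    qed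
  qed
qed

lemma det_nz: "x \<in> U \<Longrightarrow> det (g x) \<noteq> 0"
  using det_neg by fastforce

lemma g_inv: "x \<in> U \<Longrightarrow> invertible (g x)"
  using det_nz invertible_det_nz by blast

lemma ginv_l: "x \<in> U \<Longrightarrow> ginv g x ** g x = mat 1"
  unfolding ginv_def using inv_props g_inv by blast
lemma ginv_r: "x \<in> U \<Longrightarrow> g x ** ginv g x = mat 1"
  unfolding ginv_def using inv_props g_inv by blast

lemma g_transpose: "x \<in> U \<Longrightarrow> transpose (g x) = g x"
  using gsym by (simp add: transpose_def vec_eq_iff)

lemma ginv_sym: "x \<in> U \<Longrightarrow> ginv g x $ a $ b = ginv g x $ b $ a"
proof -
  assume x: "x \<in> U"
  let ?B = "ginv g x" and ?A = "g x"
  have "?A ** transpose ?B = transpose (?B ** transpose ?A)" by (simp add: matrix_transpose_mul)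
  also have "\<dots> = mat 1" using ginv_l[OF x] g_transpose[OF x] by simp
  finally have r: "?A ** transpose ?B = mat 1" .
  have "?B = ?B ** (?A ** transpose ?B)" using r by simp
  also have "\<dots> = transpose ?B" using ginv_l[OF x] by (simp add: matrix_mul_assoc)
  finally have "?B = transpose ?B" .
  then have "?B $ a $ b = transpose ?B $ a $ b" by (rule arg_cong)
  then show ?thesis by (simp add: transpose_def)
qed

lemma ginv_smooth: "smooth_on4 U (\<lambda>y. ginv g y $ a $ b)"
proof -
  have "smooth_on4 U (\<lambda>y. det (\<chi> i l. if l = a then (if i = b then 1 else 0) else g y $ i $ l) / det (g y))"
  proof (rule smooth_divide[OF openU])
    show "smooth_on4 U (\<lambda>y. det (\<chi> i l. if l = a then (if i = b then 1 else 0) else g y $ i $ l))"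
    proof (rule smooth_det[OF openU])
      fix i j
      show "smooth_on4 U (\<lambda>y. (\<chi> i l. if l = a then (if i = b then 1 else 0) else g y $ i $ l) $ i $ j)"
        by (cases "j = a") (simp_all add: smooth_const gsmooth)
    qed
    show "smooth_on4 U (\<lambda>y. det (g y))" by (rule smooth_det[OF openU gsmooth])
  qed (use det_nz in auto)
  then show ?thesis
    by (rule smooth_local[OF openU]) (simp add: ginv_def cramer_entry det_nz)
qed

lemma sqrtg_eq: "x \<in> U \<Longrightarrow> sqrtg g x = sqrt (- det (g x))"
  using det_neg unfolding sqrtg_def by (simp add: abs_of_neg)

lemma sqrtg_pos: "x \<in> U \<Longrightarrow> sqrtg g x > 0"
  using det_neg sqrtg_eq by simp

lemma sqrtg_smooth: "smooth_on4 U (sqrtg g)"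
proof -
  have "smooth_on4 U (\<lambda>y. sqrt (- det (g y)))"
    by (intro smooth_sqrt openU smooth_uminus smooth_det gsmooth) (use det_neg in auto)
  then show ?thesis by (rule smooth_local[OF openU]) (simp add: sqrtg_eq)
qed

lemma pdg_smooth: "smooth_on4 U (pd k (\<lambda>y. g y $ a $ b))"
  by (rule smooth_pd[OF gsmooth])

lemma Chr_smooth: "smooth_on4 U (Chr g l m n)"
  unfolding Chr_def[abs_def]
  by (intro smooth_cmult smooth_sum smooth_mult smooth_add smooth_diff openU ginv_smooth pdg_smooth) auto

lemma g_diffble: "x \<in> U \<Longrightarrow> (\<lambda>y. g y $ a $ b) differentiable (at x)"
  using smooth_diffble gsmooth by blast
lemma ginv_diffble: "x \<in> U \<Longrightarrow> (\<lambda>y. ginv g y $ a $ b) differentiable (at x)"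
  using smooth_diffble ginv_smooth by blast

lemma pdg_sym: "x \<in> U \<Longrightarrow> pd k (\<lambda>y. g y $ a $ b) x = pd k (\<lambda>y. g y $ b $ a) x"
  by (rule pd_local[OF openU]) (use gsym in auto)

end

lemma pd_prod:
  fixes f :: "'i \<Rightarrow> real^4 \<Rightarrow> real"
  assumes "finite I" "\<And>i. i \<in> I \<Longrightarrow> f i differentiable (at x)"
  shows "pd k (\<lambda>y. \<Prod>i\<in>I. f i y) x = (\<Sum>i\<in>I. pd k (f i) x * (\<Prod>j\<in>I - {i}. f j x))"
proof -
  from assms(2) have "\<forall>i\<in>I. \<exists>D. (f i has_derivative D) (at x)" unfolding differentiable_def by blast
  then obtain D where D: "\<And>i. i \<in> I \<Longrightarrow> (f i has_derivative D i) (at x)" by metis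
  have "((\<lambda>y. \<Prod>i\<in>I. f i y) has_derivative (\<lambda>h. \<Sum>i\<in>I. D i h * (\<Prod>j\<in>I - {i}. f j x))) (at x)"
    by (rule has_derivative_prod) (use D in auto)
  then have "pd k (\<lambda>y. \<Prod>i\<in>I. f i y) x = (\<Sum>i\<in>I. D i (axis k 1) * (\<Prod>j\<in>I - {i}. f j x))"
    by (rule pd_has_derivative)
  also have "\<dots> = (\<Sum>i\<in>I. pd k (f i) x * (\<Prod>j\<in>I - {i}. f j x))"
    by (intro sum.cong refl) (simp add: pd_has_derivative[OF D])
  finally show ?thesis .
qed

lemma differentiable_prod':
  fixes f :: "'i \<Rightarrow> real^4 \<Rightarrow> real"
  assumes "finite I" "\<And>i. i \<in> I \<Longrightarrow> f i differentiable (at x)"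
  shows "(\<lambda>y. \<Prod>i\<in>I. f i y) differentiable (at x)"
proof -
  from assms(2) have "\<forall>i\<in>I. \<exists>D. (f i has_derivative D) (at x)" unfolding differentiable_def by blast
  then obtain D where D: "\<And>i. i \<in> I \<Longrightarrow> (f i has_derivative D i) (at x)" by metis
  have "((\<lambda>y. \<Prod>i\<in>I. f i y) has_derivative (\<lambda>h. \<Sum>i\<in>I. D i h * (\<Prod>j\<in>I - {i}. f j x))) (at x)"
    by (rule has_derivative_prod) (use D in auto)
  then show ?thesis unfolding differentiable_def by blast
qed

lemma row_replace_det:
  fixes A :: "real^4^4"
  assumes "invertible A"
  shows "det (\<chi> r c. if r = i then v $ c else A $ r $ c) = det A * (\<Sum>j\<in>UNIV. v $ j * matrix_inv A $ j $ i)"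
proof -
  let ?B = "matrix_inv A"
  let ?R = "(\<chi> r c. if r = i then v $ c else A $ r $ c) :: real^4^4"
  define M :: "real^4^4" where "M = (\<chi> r c. if r = i then (v v* ?B) $ c else (if r = c then 1 else 0))"
  have "M ** A = ?R"
  proof -
    have "(M ** A) $ r $ c = ?R $ r $ c" for r c
    proof (cases "r = i")
      case True
      have "(M ** A) $ r $ c = (\<Sum>l\<in>UNIV. (v v* ?B) $ l * A $ l $ c)"
        using True by (simp add: M_def matrix_matrix_mult_def)
      also have "\<dots> = ((v v* ?B) v* A) $ c" by (simp add: vector_matrix_mult_def)
      also have "\<dots> = (v v* (?B ** A)) $ c" by (simp add: vector_matrix_mul_assoc)
      also have "\<dots> = v $ c" using inv_props(2)[OF assms] by simp
      finally show ?thesis using True by simp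
    next
      case False
      have "(M ** A) $ r $ c = (\<Sum>l\<in>UNIV. (if r = l then 1 else 0) * A $ l $ c)"
        using False by (simp add: M_def matrix_matrix_mult_def)
      also have "\<dots> = (\<Sum>l\<in>UNIV. if r = l then A $ l $ c else 0)" by (intro sum.cong) auto
      also have "\<dots> = A $ r $ c" by simp
      finally show ?thesis using False by simp
    qed
    then show ?thesis by (simp add: vec_eq_iff)
  qed
  then have "det ?R = det M * det A" using det_mul by metis
  moreover have "det M = subdet M (- (- {i}))"
    by (rule det_rows_identity) (simp add: M_def)
  moreover have "subdet M (- (- {i})) = (v v* ?B) $ i"
    by (simp add: subdet_sing M_def)
  ultimately show ?thesis by (simp add: vector_matrix_mult_def mult.commute)
qed

lemma matrix_mul_neg_right: "(M::real^'n^'m) ** (- X) = - (M ** X)"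
proof -
  have "(M ** (- X)) $ i $ j = (- (M ** X)) $ i $ j" for i j
    unfolding matrix_matrix_mult_def by (simp add: sum_negf[symmetric])
  then show ?thesis by (simp add: vec_eq_iff)
qed

context MS
begin

lemma ginv_mult_r: "z \<in> U \<Longrightarrow> (\<Sum>c\<in>UNIV. g z $ i $ c * ginv g z $ c $ j) = (if i = j then 1 else 0)"
  using ginv_r[of z] by (simp add: matrix_matrix_mult_def vec_eq_iff mat_def)

lemma dginv:
  assumes y: "y \<in> U"
  shows "pd k (\<lambda>z. ginv g z $ a $ b) y =
    - (\<Sum>c\<in>UNIV. \<Sum>d\<in>UNIV. ginv g y $ a $ c * pd k (\<lambda>z. g z $ c $ d) y * ginv g y $ d $ b)"
proof -
  let ?A = "g y" and ?B = "ginv g y"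
  define Ad :: "real^4^4" where "Ad = (\<chi> i c. pd k (\<lambda>z. g z $ i $ c) y)"
  define Bd :: "real^4^4" where "Bd = (\<chi> c j. pd k (\<lambda>z. ginv g z $ c $ j) y)"
  have e: "(\<Sum>c\<in>UNIV. Ad $ i $ c * ?B $ c $ j + ?A $ i $ c * Bd $ c $ j) = 0" for i j
  proof -
    have "pd k (\<lambda>z. \<Sum>c\<in>UNIV. g z $ i $ c * ginv g z $ c $ j) y = pd k (\<lambda>z. if i = j then 1 else 0) y"
      by (rule pd_local[OF openU y]) (simp add: ginv_mult_r)
    also have "\<dots> = 0" by (simp add: pd_const)
    finally have "pd k (\<lambda>z. \<Sum>c\<in>UNIV. g z $ i $ c * ginv g z $ c $ j) y = 0" .
    moreover have "pd k (\<lambda>z. \<Sum>c\<in>UNIV. g z $ i $ c * ginv g z $ c $ j) y =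
       (\<Sum>c\<in>UNIV. pd k (\<lambda>z. g z $ i $ c * ginv g z $ c $ j) y)"
      by (rule pd_sum) (auto intro!: differentiable_mult g_diffble ginv_diffble y)
    moreover have "pd k (\<lambda>z. g z $ i $ c * ginv g z $ c $ j) y = Ad $ i $ c * ?B $ c $ j + ?A $ i $ c * Bd $ c $ j" for c
      by (simp add: pd_mult g_diffble ginv_diffble y Ad_def Bd_def)
    ultimately show ?thesis by simp
  qed
  have "Ad ** ?B + ?A ** Bd = 0"
    using e by (simp add: vec_eq_iff matrix_matrix_mult_def sum.distrib[symmetric])
  then have AB: "?A ** Bd = - (Ad ** ?B)" by (simp add: eq_neg_iff_add_eq_0 add.commute)
  have "Bd = (?B ** ?A) ** Bd" using ginv_l[OF y] by simp
  also have "\<dots> = ?B ** (?A ** Bd)" by (simp add: matrix_mul_assoc)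
  also have "\<dots> = - (?B ** (Ad ** ?B))" unfolding AB by (rule matrix_mul_neg_right)
  finally have "Bd $ a $ b = - (?B ** (Ad ** ?B)) $ a $ b" by simp
  also have "\<dots> = - (\<Sum>c\<in>UNIV. ?B $ a $ c * (\<Sum>d\<in>UNIV. Ad $ c $ d * ?B $ d $ b))"
    by (simp add: matrix_matrix_mult_def)
  also have "\<dots> = - (\<Sum>c\<in>UNIV. \<Sum>d\<in>UNIV. ?B $ a $ c * Ad $ c $ d * ?B $ d $ b)"
    by (simp add: sum_distrib_left mult.assoc)
  finally show ?thesis by (simp add: Ad_def Bd_def)
qed

lemma ddet:
  assumes y: "y \<in> U"
  shows "pd k (\<lambda>z. det (g z)) y = det (g y) * (\<Sum>i\<in>UNIV. \<Sum>j\<in>UNIV. pd k (\<lambda>z. g z $ i $ j) y * ginv g y $ j $ i)"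
proof -
  let ?A = "g y"
  define Ad :: "real^4^4" where "Ad = (\<chi> i c. pd k (\<lambda>z. g z $ i $ c) y)"
  have dp: "pd k (\<lambda>z. \<Prod>i\<in>UNIV. g z $ i $ p i) y =
      (\<Sum>i\<in>UNIV. Ad $ i $ p i * (\<Prod>j\<in>UNIV - {i}. ?A $ j $ p j))" for p :: "4 \<Rightarrow> 4"
    by (subst pd_prod) (auto simp: Ad_def g_diffble y)
  have "pd k (\<lambda>z. det (g z)) y = (\<Sum>p\<in>{p. p permutes UNIV}. pd k (\<lambda>z. of_int (sign p) * (\<Prod>i\<in>UNIV. g z $ i $ p i)) y)"
    unfolding det_def
    by (rule pd_sum) (auto intro!: differentiable_mult differentiable_prod' g_diffble y simp: finite_permutations)
  also have "\<dots> = (\<Sum>p\<in>{p. p permutes UNIV}. of_int (sign p) * (\<Sum>i\<in>UNIV. Ad $ i $ p i * (\<Prod>j\<in>UNIV - {i}. ?A $ j $ p j)))"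
    by (intro sum.cong refl) (simp add: pd_cmult dp differentiable_prod' g_diffble y)
  also have "\<dots> = (\<Sum>i\<in>UNIV. \<Sum>p\<in>{p. p permutes UNIV}. of_int (sign p) * (Ad $ i $ p i * (\<Prod>j\<in>UNIV - {i}. ?A $ j $ p j)))"
    by (simp add: sum_distrib_left sum.swap[of _ _ UNIV])
  also have "\<dots> = (\<Sum>i\<in>UNIV. det (\<chi> r c. if r = i then (row i Ad) $ c else ?A $ r $ c))"
  proof (intro sum.cong refl)
    fix i
    show "(\<Sum>p\<in>{p. p permutes UNIV}. of_int (sign p) * (Ad $ i $ p i * (\<Prod>j\<in>UNIV - {i}. ?A $ j $ p j))) =
      det (\<chi> r c. if r = i then (row i Ad) $ c else ?A $ r $ c)"
      unfolding det_def
    proof (intro sum.cong refl)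
      fix p
      have "(\<Prod>r\<in>UNIV. (\<chi> r c. if r = i then (row i Ad) $ c else ?A $ r $ c) $ r $ p r) =
         (\<chi> r c. if r = i then (row i Ad) $ c else ?A $ r $ c) $ i $ p i *
         (\<Prod>r\<in>UNIV - {i}. (\<chi> r c. if r = i then (row i Ad) $ c else ?A $ r $ c) $ r $ p r)"
        by (rule prod.remove) auto
      also have "\<dots> = Ad $ i $ p i * (\<Prod>j\<in>UNIV - {i}. ?A $ j $ p j)"
      proof -
        have "(\<Prod>r\<in>UNIV - {i}. (\<chi> r c. if r = i then (row i Ad) $ c else ?A $ r $ c) $ r $ p r) =
            (\<Prod>j\<in>UNIV - {i}. ?A $ j $ p j)" by (rule prod.cong) auto
        moreover have "(\<chi> r c. if r = i then (row i Ad) $ c else ?A $ r $ c) $ i $ p i = Ad $ i $ p i"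
          by (simp add: row_def)
        ultimately show ?thesis by simp
      qed
      finally show "of_int (sign p) * (Ad $ i $ p i * (\<Prod>j\<in>UNIV - {i}. ?A $ j $ p j)) =
          of_int (sign p) * (\<Prod>r\<in>UNIV. (\<chi> r c. if r = i then (row i Ad) $ c else ?A $ r $ c) $ r $ p r)"
        by simp
    qed
  qed
  also have "\<dots> = (\<Sum>i\<in>UNIV. det ?A * (\<Sum>j\<in>UNIV. (row i Ad) $ j * ginv g y $ j $ i))"
    by (intro sum.cong refl) (simp add: row_replace_det g_inv y ginv_def)
  also have "\<dots> = det ?A * (\<Sum>i\<in>UNIV. \<Sum>j\<in>UNIV. pd k (\<lambda>z. g z $ i $ j) y * ginv g y $ j $ i)"
    by (simp add: sum_distrib_left row_def Ad_def)
  finally show ?thesis .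
qed

lemma dsqrtg:
  assumes y: "y \<in> U"
  shows "pd k (sqrtg g) y = sqrtg g y / 2 * (\<Sum>i\<in>UNIV. \<Sum>j\<in>UNIV. pd k (\<lambda>z. g z $ i $ j) y * ginv g y $ j $ i)"
proof -
  let ?T = "\<Sum>i\<in>UNIV. \<Sum>j\<in>UNIV. pd k (\<lambda>z. g z $ i $ j) y * ginv g y $ j $ i"
  have dd: "(\<lambda>z. - det (g z)) differentiable (at y)"
    using smooth_diffble[OF smooth_uminus[OF openU smooth_det[OF openU gsmooth]] y] .
  have pos: "- det (g y) > 0" using det_neg[OF y] by simp
  have "pd k (sqrtg g) y = pd k (\<lambda>z. sqrt (- det (g z))) y"
    by (rule pd_local[OF openU y]) (simp add: sqrtg_eq)
  also have "\<dots> = inverse (sqrt (- det (g y))) / 2 * pd k (\<lambda>z. - det (g z)) y"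
    by (rule pd_comp[OF dd]) (rule DERIV_real_sqrt[OF pos])
  also have "pd k (\<lambda>z. - det (g z)) y = - (det (g y) * ?T)"
    using pd_cmult[of "\<lambda>z. det (g z)" y k "-1"] smooth_diffble[OF smooth_det[OF openU gsmooth] y] ddet[OF y]
    by simp
  finally have e: "pd k (sqrtg g) y = inverse (sqrt (- det (g y))) / 2 * (- det (g y)) * ?T" by simp
  have "inverse (sqrt (- det (g y))) * (- det (g y)) = sqrt (- det (g y))"
    using pos by (metis divide_inverse mult.commute real_div_sqrt less_imp_le)
  moreover have "inverse (sqrt (- det (g y))) / 2 * (- det (g y)) * ?T =
     (inverse (sqrt (- det (g y))) * (- det (g y))) / 2 * ?T" by (simp add: field_simps)
  ultimately show ?thesis using e sqrtg_eq[OF y] by simp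
qed

end

lemma sum3_tuple:
  fixes F :: "'a::finite \<Rightarrow> 'b::finite \<Rightarrow> 'c::finite \<Rightarrow> real"
  shows "(\<Sum>a\<in>UNIV. \<Sum>b\<in>UNIV. \<Sum>c\<in>UNIV. F a b c) = (\<Sum>(a,b,c)\<in>UNIV. F a b c)"
  by (simp add: sum.cartesian_product UNIV_Times_UNIV[symmetric] del: UNIV_Times_UNIV)

lemma sum4_tuple:
  fixes F :: "'a::finite \<Rightarrow> 'b::finite \<Rightarrow> 'c::finite \<Rightarrow> 'd::finite \<Rightarrow> real"
  shows "(\<Sum>a\<in>UNIV. \<Sum>b\<in>UNIV. \<Sum>c\<in>UNIV. \<Sum>d\<in>UNIV. F a b c d) = (\<Sum>(a,b,c,d)\<in>UNIV. F a b c d)"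
  by (simp add: sum.cartesian_product UNIV_Times_UNIV[symmetric] del: UNIV_Times_UNIV)

lemma conj2_algebra:
  fixes G :: "'n::finite \<Rightarrow> 'n \<Rightarrow> real" and C :: "'n \<Rightarrow> 'n \<Rightarrow> 'n \<Rightarrow> real"
    and P :: "'n \<Rightarrow> 'n \<Rightarrow> 'n \<Rightarrow> 'n \<Rightarrow> real" and dG :: "'n \<Rightarrow> 'n \<Rightarrow> 'n \<Rightarrow> real"
    and Tr :: "'n \<Rightarrow> real"
  assumes Gs: "\<And>a b. G a b = G b a"
    and Cs: "\<And>l m n. C l m n = C l n m"
    and Ps: "\<And>k l m n. P k l m n = P k l n m"
    and dGd: "\<And>k a b. dG k a b = - (\<Sum>c\<in>UNIV. G a c * C b k c + G b c * C a k c)"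
    and Trd: "\<And>m. Tr m = (\<Sum>s\<in>UNIV. C s s m)"
  shows "(\<Sum>\<mu>\<in>UNIV. \<Sum>\<nu>\<in>UNIV. G \<mu> \<nu> * (\<Sum>\<rho>\<in>UNIV. \<Sum>\<sigma>\<in>UNIV. C \<rho> \<mu> \<sigma> * C \<sigma> \<rho> \<nu> - C \<rho> \<mu> \<nu> * C \<sigma> \<rho> \<sigma>))
    = (\<Sum>m\<in>UNIV. \<Sum>n\<in>UNIV. G m n * ((\<Sum>l\<in>UNIV. P l l m n) - (\<Sum>l\<in>UNIV. P n l m l)
          + (\<Sum>l\<in>UNIV. \<Sum>s\<in>UNIV. C l l s * C s m n - C l n s * C s m l)))
      - (\<Sum>\<mu>\<in>UNIV. Tr \<mu> * (\<Sum>\<nu>\<in>UNIV. \<Sum>\<sigma>\<in>UNIV. C \<mu> \<nu> \<sigma> * G \<nu> \<sigma> - C \<nu> \<nu> \<sigma> * G \<sigma> \<mu>)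
          + (\<Sum>\<nu>\<in>UNIV. \<Sum>\<sigma>\<in>UNIV. P \<mu> \<mu> \<nu> \<sigma> * G \<nu> \<sigma> + C \<mu> \<nu> \<sigma> * dG \<mu> \<nu> \<sigma>
               - (P \<mu> \<nu> \<nu> \<sigma> * G \<sigma> \<mu> + C \<nu> \<nu> \<sigma> * dG \<mu> \<sigma> \<mu>)))"
proof -
  define X1 where "X1 = (\<Sum>m\<in>UNIV. \<Sum>n\<in>UNIV. \<Sum>s\<in>UNIV. G m n * Tr s * C s m n)"
  define X2 where "X2 = (\<Sum>m\<in>UNIV. \<Sum>n\<in>UNIV. \<Sum>l\<in>UNIV. \<Sum>s\<in>UNIV. G m n * (C l n s * C s m l))"
  define PP1 where "PP1 = (\<Sum>m\<in>UNIV. \<Sum>n\<in>UNIV. \<Sum>l\<in>UNIV. G m n * P l l m n)"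
  define PP2 where "PP2 = (\<Sum>m\<in>UNIV. \<Sum>n\<in>UNIV. \<Sum>l\<in>UNIV. G m n * P n l m l)"
  define Y where "Y = (\<Sum>m\<in>UNIV. \<Sum>s\<in>UNIV. Tr m * Tr s * G s m)"
  have L1: "(\<Sum>\<mu>\<in>UNIV. \<Sum>\<nu>\<in>UNIV. G \<mu> \<nu> * (\<Sum>\<rho>\<in>UNIV. \<Sum>\<sigma>\<in>UNIV. C \<rho> \<mu> \<sigma> * C \<sigma> \<rho> \<nu>)) = X2"
    unfolding X2_def sum_distrib_left sum4_tuple
    by (rule sum.reindex_bij_witness[where i="\<lambda>(m,n,l,s). (n,m,l,s)" and j="\<lambda>(m,n,l,s). (n,m,l,s)"])
      (auto simp: Gs Cs mult_ac)
  have L2: "(\<Sum>\<mu>\<in>UNIV. \<Sum>\<nu>\<in>UNIV. G \<mu> \<nu> * (\<Sum>\<rho>\<in>UNIV. \<Sum>\<sigma>\<in>UNIV. C \<rho> \<mu> \<nu> * C \<sigma> \<rho> \<sigma>)) = X1"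
    unfolding X1_def Trd sum_distrib_left sum_distrib_right sum4_tuple
    by (rule sum.reindex_bij_witness[where i="\<lambda>(m,n,l,s). (m,n,l,s)" and j="\<lambda>(m,n,l,s). (m,n,l,s)"])
      (auto simp: Gs Cs mult_ac)
  have R3: "(\<Sum>m\<in>UNIV. \<Sum>n\<in>UNIV. G m n * (\<Sum>l\<in>UNIV. \<Sum>s\<in>UNIV. C l l s * C s m n)) = X1"
    unfolding X1_def Trd sum_distrib_left sum_distrib_right sum4_tuple
    by (rule sum.reindex_bij_witness[where i="\<lambda>(m,n,l,s). (m,n,s,l)" and j="\<lambda>(m,n,l,s). (m,n,s,l)"])
      (auto simp: Gs Cs mult_ac)
  have R4: "(\<Sum>m\<in>UNIV. \<Sum>n\<in>UNIV. G m n * (\<Sum>l\<in>UNIV. \<Sum>s\<in>UNIV. C l n s * C s m l)) = X2"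
    unfolding X2_def sum_distrib_left sum_distrib_right sum4_tuple
    by (rule sum.reindex_bij_witness[where i="\<lambda>(m,n,l,s). (m,n,l,s)" and j="\<lambda>(m,n,l,s). (m,n,l,s)"])
      (auto simp: Gs Cs mult_ac)
  have RP1: "(\<Sum>m\<in>UNIV. \<Sum>n\<in>UNIV. G m n * (\<Sum>l\<in>UNIV. P l l m n)) = PP1"
    unfolding PP1_def sum_distrib_left by simp
  have RP2: "(\<Sum>m\<in>UNIV. \<Sum>n\<in>UNIV. G m n * (\<Sum>l\<in>UNIV. P n l m l)) = PP2"
    unfolding PP2_def sum_distrib_left by simp
  have A1: "(\<Sum>\<mu>\<in>UNIV. Tr \<mu> * (\<Sum>\<nu>\<in>UNIV. \<Sum>\<sigma>\<in>UNIV. C \<mu> \<nu> \<sigma> * G \<nu> \<sigma>)) = X1"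
    unfolding X1_def Trd sum_distrib_left sum_distrib_right sum4_tuple
    by (rule sum.reindex_bij_witness[where i="\<lambda>(m,n,s,a). (s,m,n,a)" and j="\<lambda>(\<mu>,\<nu>,\<sigma>,a). (\<nu>,\<sigma>,\<mu>,a)"])
      (auto simp: Gs Cs mult_ac)
  have B1: "(\<Sum>\<mu>\<in>UNIV. Tr \<mu> * (\<Sum>\<nu>\<in>UNIV. \<Sum>\<sigma>\<in>UNIV. C \<nu> \<nu> \<sigma> * G \<sigma> \<mu>)) = Y"
    unfolding Y_def Trd sum_distrib_left sum_distrib_right sum4_tuple
    by (rule sum.reindex_bij_witness[where i="\<lambda>(m,s,b,a). (m,b,s,a)" and j="\<lambda>(\<mu>,\<nu>,\<sigma>,a). (\<mu>,\<sigma>,\<nu>,a)"])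
      (auto simp: Gs Cs mult_ac)
  have Q1: "(\<Sum>\<mu>\<in>UNIV. \<Sum>\<nu>\<in>UNIV. \<Sum>\<sigma>\<in>UNIV. P \<mu> \<mu> \<nu> \<sigma> * G \<nu> \<sigma>) = PP1"
    unfolding PP1_def sum3_tuple
    by (rule sum.reindex_bij_witness[where i="\<lambda>(m,n,l). (l,m,n)" and j="\<lambda>(l,m,n). (m,n,l)"])
      (auto simp: Gs Ps mult_ac)
  have Q3: "(\<Sum>\<mu>\<in>UNIV. \<Sum>\<nu>\<in>UNIV. \<Sum>\<sigma>\<in>UNIV. P \<mu> \<nu> \<nu> \<sigma> * G \<sigma> \<mu>) = PP2"
    unfolding PP2_def sum3_tuple
    by (rule sum.reindex_bij_witness[where i="\<lambda>(m,n,l). (n,l,m)" and j="\<lambda>(n,l,m). (m,n,l)"])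
      (auto simp: Gs Ps mult_ac)
  have Q2: "(\<Sum>\<mu>\<in>UNIV. \<Sum>\<nu>\<in>UNIV. \<Sum>\<sigma>\<in>UNIV. C \<mu> \<nu> \<sigma> * dG \<mu> \<nu> \<sigma>) = - 2 * X2"
  proof -
    have a2: "(\<Sum>\<mu>\<in>UNIV. \<Sum>\<nu>\<in>UNIV. \<Sum>\<sigma>\<in>UNIV. \<Sum>c\<in>UNIV. C \<mu> \<nu> \<sigma> * (G \<nu> c * C \<sigma> \<mu> c)) = X2"
      unfolding X2_def sum4_tuple
      by (rule sum.reindex_bij_witness[where i="\<lambda>(m,n,l,s). (s,m,l,n)" and j="\<lambda>(s,m,l,n). (m,n,l,s)"])
        (auto simp: Gs Cs mult_ac)
    have a3: "(\<Sum>\<mu>\<in>UNIV. \<Sum>\<nu>\<in>UNIV. \<Sum>\<sigma>\<in>UNIV. \<Sum>c\<in>UNIV. C \<mu> \<nu> \<sigma> * (G \<sigma> c * C \<nu> \<mu> c)) = X2"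
      unfolding X2_def sum4_tuple
      by (rule sum.reindex_bij_witness[where i="\<lambda>(m,n,l,s). (s,l,m,n)" and j="\<lambda>(s,l,m,n). (m,n,l,s)"])
        (auto simp: Gs Cs mult_ac)
    have "(\<Sum>\<mu>\<in>UNIV. \<Sum>\<nu>\<in>UNIV. \<Sum>\<sigma>\<in>UNIV. C \<mu> \<nu> \<sigma> * dG \<mu> \<nu> \<sigma>) =
      - ((\<Sum>\<mu>\<in>UNIV. \<Sum>\<nu>\<in>UNIV. \<Sum>\<sigma>\<in>UNIV. \<Sum>c\<in>UNIV. C \<mu> \<nu> \<sigma> * (G \<nu> c * C \<sigma> \<mu> c))
       + (\<Sum>\<mu>\<in>UNIV. \<Sum>\<nu>\<in>UNIV. \<Sum>\<sigma>\<in>UNIV. \<Sum>c\<in>UNIV. C \<mu> \<nu> \<sigma> * (G \<sigma> c * C \<nu> \<mu> c)))"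
      by (simp add: dGd sum_distrib_left distrib_left sum.distrib right_diff_distrib sum_subtractf sum_negf)
    then show ?thesis using a2 a3 by simp
  qed
  have Q4: "(\<Sum>\<mu>\<in>UNIV. \<Sum>\<nu>\<in>UNIV. \<Sum>\<sigma>\<in>UNIV. C \<nu> \<nu> \<sigma> * dG \<mu> \<sigma> \<mu>) = - (Y + X1)"
  proof -
    have b2: "(\<Sum>\<mu>\<in>UNIV. \<Sum>\<nu>\<in>UNIV. \<Sum>\<sigma>\<in>UNIV. \<Sum>c\<in>UNIV. C \<nu> \<nu> \<sigma> * (G \<sigma> c * C \<mu> \<mu> c)) = Y"
      unfolding Y_def Trd sum_distrib_left sum_distrib_right sum4_tuple
      by (rule sum.reindex_bij_witness[where i="\<lambda>(m,s,b,a). (a,b,s,m)" and j="\<lambda>(\<mu>,\<nu>,\<sigma>,c). (c,\<sigma>,\<nu>,\<mu>)"])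
        (auto simp: Gs Cs mult_ac)
    have b3: "(\<Sum>\<mu>\<in>UNIV. \<Sum>\<nu>\<in>UNIV. \<Sum>\<sigma>\<in>UNIV. \<Sum>c\<in>UNIV. C \<nu> \<nu> \<sigma> * (G \<mu> c * C \<sigma> \<mu> c)) = X1"
      unfolding X1_def Trd sum_distrib_left sum_distrib_right sum4_tuple
      by (rule sum.reindex_bij_witness[where i="\<lambda>(m,n,s,l). (m,l,s,n)" and j="\<lambda>(m,l,s,n). (m,n,s,l)"])
        (auto simp: Gs Cs mult_ac)
    have "(\<Sum>\<mu>\<in>UNIV. \<Sum>\<nu>\<in>UNIV. \<Sum>\<sigma>\<in>UNIV. C \<nu> \<nu> \<sigma> * dG \<mu> \<sigma> \<mu>) =
      - ((\<Sum>\<mu>\<in>UNIV. \<Sum>\<nu>\<in>UNIV. \<Sum>\<sigma>\<in>UNIV. \<Sum>c\<in>UNIV. C \<nu> \<nu> \<sigma> * (G \<sigma> c * C \<mu> \<mu> c))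
       + (\<Sum>\<mu>\<in>UNIV. \<Sum>\<nu>\<in>UNIV. \<Sum>\<sigma>\<in>UNIV. \<Sum>c\<in>UNIV. C \<nu> \<nu> \<sigma> * (G \<mu> c * C \<sigma> \<mu> c)))"
      by (simp add: dGd sum_distrib_left distrib_left sum.distrib right_diff_distrib sum_subtractf sum_negf)
    then show ?thesis using b2 b3 by simp
  qed
  have LHS: "(\<Sum>\<mu>\<in>UNIV. \<Sum>\<nu>\<in>UNIV. G \<mu> \<nu> * (\<Sum>\<rho>\<in>UNIV. \<Sum>\<sigma>\<in>UNIV. C \<rho> \<mu> \<sigma> * C \<sigma> \<rho> \<nu> - C \<rho> \<mu> \<nu> * C \<sigma> \<rho> \<sigma>))
     = X2 - X1"
    using L1 L2 by (simp add: sum_subtractf right_diff_distrib)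
  have RHS1: "(\<Sum>m\<in>UNIV. \<Sum>n\<in>UNIV. G m n * ((\<Sum>l\<in>UNIV. P l l m n) - (\<Sum>l\<in>UNIV. P n l m l)
          + (\<Sum>l\<in>UNIV. \<Sum>s\<in>UNIV. C l l s * C s m n - C l n s * C s m l))) = PP1 - PP2 + X1 - X2"
    using RP1 RP2 R3 R4 by (simp add: sum_subtractf right_diff_distrib distrib_left sum.distrib)
  have RHS2: "(\<Sum>\<mu>\<in>UNIV. Tr \<mu> * (\<Sum>\<nu>\<in>UNIV. \<Sum>\<sigma>\<in>UNIV. C \<mu> \<nu> \<sigma> * G \<nu> \<sigma> - C \<nu> \<nu> \<sigma> * G \<sigma> \<mu>)
          + (\<Sum>\<nu>\<in>UNIV. \<Sum>\<sigma>\<in>UNIV. P \<mu> \<mu> \<nu> \<sigma> * G \<nu> \<sigma> + C \<mu> \<nu> \<sigma> * dG \<mu> \<nu> \<sigma>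
               - (P \<mu> \<nu> \<nu> \<sigma> * G \<sigma> \<mu> + C \<nu> \<nu> \<sigma> * dG \<mu> \<sigma> \<mu>)))
     = (X1 - Y) + (PP1 + (- 2 * X2) - (PP2 + - (Y + X1)))"
    using A1 B1 Q1 Q2 Q3 Q4 by (simp add: sum_subtractf right_diff_distrib distrib_left sum.distrib)
  show ?thesis unfolding LHS RHS1 RHS2 by simp
qed
lemma xmu_algebra:
  fixes G :: "'n::finite \<Rightarrow> 'n \<Rightarrow> real" and C :: "'n \<Rightarrow> 'n \<Rightarrow> 'n \<Rightarrow> real"
    and dG :: "'n \<Rightarrow> 'n \<Rightarrow> 'n \<Rightarrow> real"
  assumes Gs: "\<And>a b. G a b = G b a"
    and Cs: "\<And>l m n. C l m n = C l n m"
    and dGd: "\<And>k a b. dG k a b = - (\<Sum>c\<in>UNIV. G a c * C b k c + G b c * C a k c)"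
    and Gnz: "\<And>a. G a a \<noteq> 0"
  shows "-2 * (\<Sum>a\<in>UNIV. \<Sum>b\<in>UNIV. (G a b - G a mu * G mu b / G mu mu) * C mu a b) =
    (\<Sum>\<nu>\<in>-{mu}. dG \<nu> mu \<nu> - G mu \<nu> * (dG \<nu> mu mu / G mu mu + dG \<nu> \<nu> \<nu> / G \<nu> \<nu>) / 2)
    - (\<Sum>\<nu>\<in>UNIV. \<Sum>\<sigma>\<in>UNIV. C mu \<nu> \<sigma> * G \<nu> \<sigma> - C \<nu> \<nu> \<sigma> * G \<sigma> mu)
    + (\<Sum>\<nu>\<in>UNIV. \<Sum>\<sigma>\<in>UNIV. G mu \<sigma> * G mu \<nu> * C mu \<nu> \<sigma> / G mu mu - G \<nu> \<sigma> * G \<nu> mu * C \<nu> \<nu> \<sigma> / G \<nu> \<nu>)"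
proof -
  define K0 where "K0 = (\<Sum>a\<in>UNIV. \<Sum>b\<in>UNIV. G a b * C mu a b)"
  define K1 where "K1 = (\<Sum>a\<in>UNIV. \<Sum>b\<in>UNIV. G mu a * G mu b * C mu a b)"
  define H0 where "H0 = (\<Sum>a\<in>UNIV. \<Sum>b\<in>UNIV. G mu b * C a a b)"
  define H1 where "H1 = (\<Sum>a\<in>UNIV. G mu a / G a a * (\<Sum>b\<in>UNIV. G a b * C a a b))"
  define f where "f = (\<lambda>\<nu>. - (\<Sum>c\<in>UNIV. G \<nu> c * C mu \<nu> c) + G mu \<nu> / G mu mu * (\<Sum>c\<in>UNIV. G mu c * C mu \<nu> c))"
  define h where "h = (\<lambda>\<nu>. - (\<Sum>c\<in>UNIV. G mu c * C \<nu> \<nu> c) + G mu \<nu> / G \<nu> \<nu> * (\<Sum>c\<in>UNIV. G \<nu> c * C \<nu> \<nu> c))"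
  have S: "dG \<nu> mu \<nu> - G mu \<nu> * (dG \<nu> mu mu / G mu mu + dG \<nu> \<nu> \<nu> / G \<nu> \<nu>) / 2 = f \<nu> + h \<nu>" for \<nu>
  proof -
    have e1: "dG \<nu> mu \<nu> = - (\<Sum>c\<in>UNIV. G mu c * C \<nu> \<nu> c) - (\<Sum>c\<in>UNIV. G \<nu> c * C mu \<nu> c)"
      by (simp add: dGd sum.distrib Cs[of mu])
    have e2: "dG \<nu> mu mu = - 2 * (\<Sum>c\<in>UNIV. G mu c * C mu \<nu> c)"
      by (simp add: dGd sum.distrib sum_distrib_left sum_negf)
    have e3: "dG \<nu> \<nu> \<nu> = - 2 * (\<Sum>c\<in>UNIV. G \<nu> c * C \<nu> \<nu> c)"
      by (simp add: dGd sum.distrib sum_distrib_left sum_negf)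
    show ?thesis unfolding e1 e2 e3 f_def h_def by (simp add: field_simps)
  qed
  have z: "f mu + h mu = 0"
    unfolding f_def h_def using Gnz[of mu] by (simp add: Cs[of mu])
  have sumS: "(\<Sum>\<nu>\<in>-{mu}. dG \<nu> mu \<nu> - G mu \<nu> * (dG \<nu> mu mu / G mu mu + dG \<nu> \<nu> \<nu> / G \<nu> \<nu>) / 2)
      = (\<Sum>\<nu>\<in>UNIV. f \<nu> + h \<nu>)"
  proof -
    have "(\<Sum>\<nu>\<in>UNIV. f \<nu> + h \<nu>) = (f mu + h mu) + (\<Sum>\<nu>\<in>UNIV - {mu}. f \<nu> + h \<nu>)"
      by (simp add: sum.remove)
    then show ?thesis using z S by (simp add: Compl_eq_Diff_UNIV)
  qed
  have sf: "(\<Sum>\<nu>\<in>UNIV. f \<nu>) = - K0 + K1 / G mu mu"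
    unfolding f_def K0_def K1_def
    by (simp add: sum.distrib sum_negf sum_divide_distrib sum_distrib_left sum_subtractf mult_ac)
  have sh: "(\<Sum>\<nu>\<in>UNIV. h \<nu>) = - H0 + H1"
    unfolding h_def H0_def H1_def
    by (simp add: sum.distrib sum_negf sum_subtractf)
  have V: "(\<Sum>\<nu>\<in>UNIV. \<Sum>\<sigma>\<in>UNIV. C mu \<nu> \<sigma> * G \<nu> \<sigma> - C \<nu> \<nu> \<sigma> * G \<sigma> mu) = K0 - H0"
  proof -
    have a: "(\<Sum>\<nu>\<in>UNIV. \<Sum>\<sigma>\<in>UNIV. C mu \<nu> \<sigma> * G \<nu> \<sigma>) = K0"
      unfolding K0_def by (simp add: mult.commute)
    have b: "(\<Sum>\<nu>\<in>UNIV. \<Sum>\<sigma>\<in>UNIV. C \<nu> \<nu> \<sigma> * G \<sigma> mu) = H0"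
      unfolding H0_def by (rule sum.cong[OF refl], rule sum.cong[OF refl]) (metis Gs mult.commute)
    show ?thesis using a b by (simp add: sum_subtractf)
  qed
  have W: "(\<Sum>\<nu>\<in>UNIV. \<Sum>\<sigma>\<in>UNIV. G mu \<sigma> * G mu \<nu> * C mu \<nu> \<sigma> / G mu mu - G \<nu> \<sigma> * G \<nu> mu * C \<nu> \<nu> \<sigma> / G \<nu> \<nu>)
      = K1 / G mu mu - H1"
  proof -
    have a: "(\<Sum>\<nu>\<in>UNIV. \<Sum>\<sigma>\<in>UNIV. G mu \<sigma> * G mu \<nu> * C mu \<nu> \<sigma> / G mu mu) = K1 / G mu mu"
      unfolding K1_def sum_divide_distrib by (rule sum.cong[OF refl], rule sum.cong[OF refl]) (simp add: mult_ac)
    have b: "(\<Sum>\<nu>\<in>UNIV. \<Sum>\<sigma>\<in>UNIV. G \<nu> \<sigma> * G \<nu> mu * C \<nu> \<nu> \<sigma> / G \<nu> \<nu>) = H1"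
      unfolding H1_def sum_distrib_left by (rule sum.cong[OF refl], rule sum.cong[OF refl]) (metis Gs mult.commute mult.left_commute times_divide_eq_left)
    show ?thesis using a b by (simp add: sum_subtractf)
  qed
  have L: "(\<Sum>a\<in>UNIV. \<Sum>b\<in>UNIV. (G a b - G a mu * G mu b / G mu mu) * C mu a b) = K0 - K1 / G mu mu"
  proof -
    have b: "(\<Sum>a\<in>UNIV. \<Sum>b\<in>UNIV. G a mu * G mu b / G mu mu * C mu a b) = K1 / G mu mu"
      unfolding K1_def sum_divide_distrib by (rule sum.cong[OF refl], rule sum.cong[OF refl]) (metis Gs mult.commute mult.left_commute times_divide_eq_left)
    show ?thesis using b unfolding K0_def by (simp add: sum_subtractf left_diff_distrib)
  qed
  show ?thesis unfolding sumS sum.distrib sf sh V W L by simp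
qed

lemma dG_gamma_algebra:
  fixes G :: "'n::finite \<Rightarrow> 'n \<Rightarrow> real" and D :: "'n \<Rightarrow> 'n \<Rightarrow> 'n \<Rightarrow> real"
    and C :: "'n \<Rightarrow> 'n \<Rightarrow> 'n \<Rightarrow> real"
  assumes Gs: "\<And>a b. G a b = G b a"
    and Ds: "\<And>k a b. D k a b = D k b a"
    and Cd: "\<And>l m n. C l m n = 1/2 * (\<Sum>r\<in>UNIV. G l r * (D m r n + D n r m - D r m n))"
  shows "(\<Sum>c\<in>UNIV. G a c * C b k c + G b c * C a k c) = (\<Sum>c\<in>UNIV. \<Sum>d\<in>UNIV. G a c * D k c d * G d b)"
proof -
  have h1: "(\<Sum>c\<in>UNIV. G a c * C b k c) = (\<Sum>c\<in>UNIV. \<Sum>r\<in>UNIV. G a c * G b r * (D k r c + D c r k - D r k c) / 2)"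
    unfolding Cd by (simp add: sum_distrib_left sum_divide_distrib mult_ac)
  have h2: "(\<Sum>c\<in>UNIV. G b c * C a k c) = (\<Sum>r\<in>UNIV. \<Sum>c\<in>UNIV. G a c * G b r * (D k c r + D r c k - D c k r) / 2)"
    unfolding Cd by (simp add: sum_distrib_left sum_divide_distrib mult_ac)
  have h2': "(\<Sum>c\<in>UNIV. G b c * C a k c) = (\<Sum>c\<in>UNIV. \<Sum>r\<in>UNIV. G a c * G b r * (D k c r + D r c k - D c k r) / 2)"
    unfolding h2 by (rule sum.swap)
  have "(\<Sum>c\<in>UNIV. G a c * C b k c + G b c * C a k c) =
     (\<Sum>c\<in>UNIV. \<Sum>r\<in>UNIV. G a c * G b r * (D k r c + D c r k - D r k c) / 2 + G a c * G b r * (D k c r + D r c k - D c k r) / 2)"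
    unfolding sum.distrib h1 h2' ..
  also have "\<dots> = (\<Sum>c\<in>UNIV. \<Sum>r\<in>UNIV. G a c * D k c r * G r b)"
  proof (intro sum.cong refl)
    fix c r
    have "D k c r = D k r c" "D c r k = D c k r" "D r c k = D r k c" using Ds by auto
    then show "G a c * G b r * (D k r c + D c r k - D r k c) / 2 + G a c * G b r * (D k c r + D r c k - D c k r) / 2 =
       G a c * D k c r * G r b" using Gs[of b r] by (simp add: field_simps)
  qed
  finally show ?thesis .
qed

lemma trace_gamma_algebra:
  fixes G :: "'n::finite \<Rightarrow> 'n \<Rightarrow> real" and D :: "'n \<Rightarrow> 'n \<Rightarrow> 'n \<Rightarrow> real"
    and C :: "'n \<Rightarrow> 'n \<Rightarrow> 'n \<Rightarrow> real"
  assumes Gs: "\<And>a b. G a b = G b a"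
    and Ds: "\<And>k a b. D k a b = D k b a"
    and Cd: "\<And>l m n. C l m n = 1/2 * (\<Sum>r\<in>UNIV. G l r * (D m r n + D n r m - D r m n))"
  shows "(\<Sum>s\<in>UNIV. C s s k) = 1/2 * (\<Sum>a\<in>UNIV. \<Sum>b\<in>UNIV. D k a b * G b a)"
proof -
  have e: "(\<Sum>s\<in>UNIV. \<Sum>r\<in>UNIV. G s r * D s r k) = (\<Sum>s\<in>UNIV. \<Sum>r\<in>UNIV. G s r * D r s k)"
    by (subst sum.swap) (simp add: Gs)
  have "(\<Sum>s\<in>UNIV. C s s k) = 1/2 * (\<Sum>s\<in>UNIV. \<Sum>r\<in>UNIV. G s r * D s r k + G s r * D k r s - G s r * D r s k)"
    unfolding Cd by (simp add: sum_distrib_left distrib_left right_diff_distrib)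
  also have "\<dots> = 1/2 * (\<Sum>s\<in>UNIV. \<Sum>r\<in>UNIV. G s r * D k r s)"
    using e by (simp add: sum.distrib sum_subtractf)
  also have "(\<Sum>s\<in>UNIV. \<Sum>r\<in>UNIV. G s r * D k r s) = (\<Sum>a\<in>UNIV. \<Sum>b\<in>UNIV. D k a b * G b a)"
    by (subst sum.swap) (simp add: mult.commute)
  finally show ?thesis .
qed


context MS
begin

lemma Chr_sym: "y \<in> U \<Longrightarrow> Chr g l m n y = Chr g l n m y"
  unfolding Chr_def by (intro arg_cong[where f="\<lambda>t. 1/2 * t"] sum.cong refl) (simp add: pdg_sym[of y _ m n])

lemma Chr_sym_pd: "y \<in> U \<Longrightarrow> pd k (Chr g l m n) y = pd k (Chr g l n m) y"
  by (rule pd_local[OF openU]) (simp_all add: Chr_sym)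

lemma dG_chr:
  assumes y: "y \<in> U"
  shows "pd k (\<lambda>z. ginv g z $ a $ b) y = - (\<Sum>c\<in>UNIV. ginv g y $ a $ c * Chr g b k c y + ginv g y $ b $ c * Chr g a k c y)"
proof -
  have "(\<Sum>c\<in>UNIV. ginv g y $ a $ c * Chr g b k c y + ginv g y $ b $ c * Chr g a k c y) =
     (\<Sum>c\<in>UNIV. \<Sum>d\<in>UNIV. ginv g y $ a $ c * pd k (\<lambda>z. g z $ c $ d) y * ginv g y $ d $ b)"
    by (rule dG_gamma_algebra[where G="\<lambda>a b. ginv g y $ a $ b" and D="\<lambda>k a b. pd k (\<lambda>z. g z $ a $ b) y"
          and C="\<lambda>l m n. Chr g l m n y"])
      (simp_all add: ginv_sym[OF y] pdg_sym[OF y] Chr_def)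
  then show ?thesis using dginv[OF y] by simp
qed

lemma dsqrtg_chr:
  assumes y: "y \<in> U"
  shows "pd k (sqrtg g) y = sqrtg g y * (\<Sum>s\<in>UNIV. Chr g s s k y)"
proof -
  have "(\<Sum>s\<in>UNIV. Chr g s s k y) = 1/2 * (\<Sum>a\<in>UNIV. \<Sum>b\<in>UNIV. pd k (\<lambda>z. g z $ a $ b) y * ginv g y $ b $ a)"
    by (rule trace_gamma_algebra[where G="\<lambda>a b. ginv g y $ a $ b" and D="\<lambda>k a b. pd k (\<lambda>z. g z $ a $ b) y"
          and C="\<lambda>l m n. Chr g l m n y"])
      (simp_all add: ginv_sym[OF y] pdg_sym[OF y] Chr_def)
  then have "pd k (sqrtg g) y * 2 = sqrtg g y * ((\<Sum>s\<in>UNIV. Chr g s s k y) * 2)"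
    using dsqrtg[OF y, of k] by simp
  then show ?thesis by simp
qed

lemma Chr_diffble: "y \<in> U \<Longrightarrow> Chr g l m n differentiable (at y)"
  using smooth_diffble[OF Chr_smooth] .

lemma sqrtg_diffble: "y \<in> U \<Longrightarrow> sqrtg g differentiable (at y)"
  using smooth_diffble[OF sqrtg_smooth] .

lemma conj2:
  assumes x: "x \<in> U"
  shows "LGamma g x = sqrtg g x * Rscal g x
      - (\<Sum>mu\<in>UNIV. pd mu (\<lambda>y. sqrtg g y *
           (\<Sum>nu\<in>UNIV. \<Sum>sig\<in>UNIV. Chr g mu nu sig y * ginv g y $ nu $ sig
                                    - Chr g nu nu sig y * ginv g y $ sig $ mu)) x)"
proof -
  let ?G = "\<lambda>a b. ginv g x $ a $ b"
  let ?C = "\<lambda>l m n. Chr g l m n x"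
  let ?P = "\<lambda>k l m n. pd k (Chr g l m n) x"
  let ?dG = "\<lambda>k a b. pd k (\<lambda>z. ginv g z $ a $ b) x"
  let ?Tr = "\<lambda>m. \<Sum>s\<in>UNIV. Chr g s s m x"
  define inner where "inner = (\<lambda>mu y. \<Sum>nu\<in>UNIV. \<Sum>sig\<in>UNIV. Chr g mu nu sig y * ginv g y $ nu $ sig
                                    - Chr g nu nu sig y * ginv g y $ sig $ mu)"
  have inner_smooth: "smooth_on4 U (inner mu)" for mu
    unfolding inner_def
    by (intro smooth_sum smooth_diff smooth_mult Chr_smooth ginv_smooth openU) auto
  have pdinner: "pd mu (inner mu) x = (\<Sum>\<nu>\<in>UNIV. \<Sum>\<sigma>\<in>UNIV. ?P mu mu \<nu> \<sigma> * ?G \<nu> \<sigma> + ?C mu \<nu> \<sigma> * ?dG mu \<nu> \<sigma>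
               - (?P mu \<nu> \<nu> \<sigma> * ?G \<sigma> mu + ?C \<nu> \<nu> \<sigma> * ?dG mu \<sigma> mu))" for mu
  proof -
    have "pd mu (inner mu) x = (\<Sum>\<nu>\<in>UNIV. pd mu (\<lambda>y. \<Sum>\<sigma>\<in>UNIV. Chr g mu \<nu> \<sigma> y * ginv g y $ \<nu> $ \<sigma>
                                    - Chr g \<nu> \<nu> \<sigma> y * ginv g y $ \<sigma> $ mu) x)"
      unfolding inner_def
      by (rule pd_sum) (auto intro!: smooth_diffble[OF _ x] smooth_sum smooth_diff smooth_mult Chr_smooth ginv_smooth openU)
    also have "\<dots> = (\<Sum>\<nu>\<in>UNIV. \<Sum>\<sigma>\<in>UNIV. pd mu (\<lambda>y. Chr g mu \<nu> \<sigma> y * ginv g y $ \<nu> $ \<sigma>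
                                    - Chr g \<nu> \<nu> \<sigma> y * ginv g y $ \<sigma> $ mu) x)"
      by (intro sum.cong refl pd_sum) (auto intro!: smooth_diffble[OF _ x] smooth_diff smooth_mult Chr_smooth ginv_smooth openU)
    also have "\<dots> = (\<Sum>\<nu>\<in>UNIV. \<Sum>\<sigma>\<in>UNIV. ?P mu mu \<nu> \<sigma> * ?G \<nu> \<sigma> + ?C mu \<nu> \<sigma> * ?dG mu \<nu> \<sigma>
               - (?P mu \<nu> \<nu> \<sigma> * ?G \<sigma> mu + ?C \<nu> \<nu> \<sigma> * ?dG mu \<sigma> mu))"
      by (intro sum.cong refl)
        (simp add: pd_diff pd_mult differentiable_mult Chr_diffble ginv_diffble x)
    finally show ?thesis .
  qed
  have pdV: "pd mu (\<lambda>y. sqrtg g y * inner mu y) x =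
      sqrtg g x * (?Tr mu * inner mu x + pd mu (inner mu) x)" for mu
    using pd_mult[OF sqrtg_diffble[OF x] smooth_diffble[OF inner_smooth x], of mu]
      dsqrtg_chr[OF x, of mu] by (simp add: algebra_simps)
  have alg: "(\<Sum>\<mu>\<in>UNIV. \<Sum>\<nu>\<in>UNIV. ?G \<mu> \<nu> * (\<Sum>\<rho>\<in>UNIV. \<Sum>\<sigma>\<in>UNIV. ?C \<rho> \<mu> \<sigma> * ?C \<sigma> \<rho> \<nu> - ?C \<rho> \<mu> \<nu> * ?C \<sigma> \<rho> \<sigma>))
    = (\<Sum>m\<in>UNIV. \<Sum>n\<in>UNIV. ?G m n * ((\<Sum>l\<in>UNIV. ?P l l m n) - (\<Sum>l\<in>UNIV. ?P n l m l)
          + (\<Sum>l\<in>UNIV. \<Sum>s\<in>UNIV. ?C l l s * ?C s m n - ?C l n s * ?C s m l)))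
      - (\<Sum>\<mu>\<in>UNIV. ?Tr \<mu> * (\<Sum>\<nu>\<in>UNIV. \<Sum>\<sigma>\<in>UNIV. ?C \<mu> \<nu> \<sigma> * ?G \<nu> \<sigma> - ?C \<nu> \<nu> \<sigma> * ?G \<sigma> \<mu>)
          + (\<Sum>\<nu>\<in>UNIV. \<Sum>\<sigma>\<in>UNIV. ?P \<mu> \<mu> \<nu> \<sigma> * ?G \<nu> \<sigma> + ?C \<mu> \<nu> \<sigma> * ?dG \<mu> \<nu> \<sigma>
               - (?P \<mu> \<nu> \<nu> \<sigma> * ?G \<sigma> \<mu> + ?C \<nu> \<nu> \<sigma> * ?dG \<mu> \<sigma> \<mu>)))"
    by (rule conj2_algebra) (simp_all add: ginv_sym[OF x] Chr_sym[OF x] Chr_sym_pd[OF x] dG_chr[OF x])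
  have "sqrtg g x * Rscal g x - (\<Sum>mu\<in>UNIV. pd mu (\<lambda>y. sqrtg g y * inner mu y) x)
     = sqrtg g x * ((\<Sum>m\<in>UNIV. \<Sum>n\<in>UNIV. ?G m n * ((\<Sum>l\<in>UNIV. ?P l l m n) - (\<Sum>l\<in>UNIV. ?P n l m l)
          + (\<Sum>l\<in>UNIV. \<Sum>s\<in>UNIV. ?C l l s * ?C s m n - ?C l n s * ?C s m l)))
      - (\<Sum>\<mu>\<in>UNIV. ?Tr \<mu> * (\<Sum>\<nu>\<in>UNIV. \<Sum>\<sigma>\<in>UNIV. ?C \<mu> \<nu> \<sigma> * ?G \<nu> \<sigma> - ?C \<nu> \<nu> \<sigma> * ?G \<sigma> \<mu>)
          + (\<Sum>\<nu>\<in>UNIV. \<Sum>\<sigma>\<in>UNIV. ?P \<mu> \<mu> \<nu> \<sigma> * ?G \<nu> \<sigma> + ?C \<mu> \<nu> \<sigma> * ?dG \<mu> \<nu> \<sigma>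
               - (?P \<mu> \<nu> \<nu> \<sigma> * ?G \<sigma> \<mu> + ?C \<nu> \<nu> \<sigma> * ?dG \<mu> \<sigma> \<mu>))))"
    unfolding pdV pdinner unfolding Rscal_def Ricci_def inner_def by (simp add: right_diff_distrib sum_distrib_left)
  also have "\<dots> = LGamma g x" unfolding alg[symmetric] LGamma_def ..
  finally show ?thesis unfolding inner_def by simp
qed

end

lemma qq_alg:
  fixes P dc c e da db a b :: real
  assumes "P > 0"
  shows "dc * inverse (sqrt P) + c * (- (inverse (sqrt P) / 2 * inverse (sqrt P ^ 2)) * (e * da * b + e * a * db))
     = dc / sqrt P - c * (e * (da * b + a * db)) / (2 * P * sqrt P)"
proof -
  have "sqrt P ^ 2 = P" using assms by simp
  then show ?thesis using assms by (simp add: field_simps)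
qed

lemma S_alg_aux:
  fixes Y s r k :: real
  assumes "s > 0" "r > 0"
  shows "k * r * ((Y / s) / (r / s)) = k * Y"
  using assms by (simp add: field_simps)

lemma S_alg:
  fixes e a b c d da db dc :: real
  assumes e2: "e * e = 1" and P: "e * a * b > 0" and D: "e * (a * b - c * c) > 0"
  shows "sqrt \<bar>d * (a * b - c * c)\<bar> *
      ((dc / sqrt (e * a * b) - c * (e * (da * b + a * db)) / (2 * (e * a * b) * sqrt (e * a * b)))
        / sqrt (1 - e * (c / sqrt (e * a * b))\<^sup>2))
    = sqrt \<bar>d\<bar> * (dc - c * (da / a + db / b) / 2)"
proof -
  define s where "s = sqrt (e * a * b)"
  define r where "r = sqrt (e * (a * b - c * c))"
  have s0: "s > 0" unfolding s_def using P by simp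
  have ss: "s * s = e * a * b" unfolding s_def using P by simp
  have r0: "r > 0" unfolding r_def using D by simp
  have a0: "a \<noteq> 0" and b0: "b \<noteq> 0" using P by auto
  have eD: "\<bar>a * b - c * c\<bar> = e * (a * b - c * c)"
  proof -
    have "e = 1 \<or> e = -1" using e2 by (metis mult_cancel_left1 square_eq_1_iff)
    then show ?thesis using D by (auto simp: abs_if)
  qed
  have q: "1 - e * (c / s)\<^sup>2 = e * (a * b - c * c) / (s * s)"
  proof -
    have "1 - e * (c / s)\<^sup>2 = (s * s - e * (c * c)) / (s * s)"
      using s0 by (simp add: field_simps power2_eq_square)
    also have "s * s - e * (c * c) = e * (a * b - c * c)" unfolding ss by (simp add: algebra_simps)
    finally show ?thesis .
  qed
  have sq1: "sqrt (1 - e * (c / s)\<^sup>2) = r / s"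
    unfolding q r_def using s0 by (simp add: real_sqrt_divide real_sqrt_mult_self)
  have sq2: "sqrt \<bar>d * (a * b - c * c)\<bar> = sqrt \<bar>d\<bar> * r"
    unfolding r_def by (simp add: abs_mult eD real_sqrt_mult)
  have "sqrt \<bar>d * (a * b - c * c)\<bar> *
      ((dc / s - c * (e * (da * b + a * db)) / (2 * (e * a * b) * s)) / sqrt (1 - e * (c / s)\<^sup>2))
      = sqrt \<bar>d\<bar> * (dc - c * (e * (da * b + a * db)) / (2 * (e * a * b)))"
  proof -
    have "dc / s - c * (e * (da * b + a * db)) / (2 * (e * a * b) * s) = (dc - c * (e * (da * b + a * db)) / (2 * (e * a * b))) / s"
      by (simp add: diff_divide_distrib)
    then show ?thesis unfolding sq1 sq2 using S_alg_aux[OF s0 r0] by simp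
  qed
  also have "c * (e * (da * b + a * db)) / (2 * (e * a * b)) = c * (da / a + db / b) / 2"
  proof -
    have e0: "e \<noteq> 0" using e2 by auto
    have "c * (e * (da * b + a * db)) / (2 * (e * a * b)) = c * (da * b + a * db) / (2 * (a * b))"
      using e0 by simp
    also have "\<dots> = c * (da / a + db / b) / 2" using a0 b0 by (simp add: field_simps)
    finally show ?thesis .
  qed
  finally show ?thesis unfolding s_def .
qed


context MS
begin

lemma Gdiag_sign: assumes y: "y \<in> U" shows "xi a * \<bar>ginv g y $ a $ a\<bar> = ginv g y $ a $ a"
proof (cases "a = 0")
  case True then show ?thesis using g00[OF y] by (simp add: xi_def)
next
  case False then show ?thesis using gii[OF y False] by (simp add: xi_def)
qed

lemma Gdiag_nz: assumes y: "y \<in> U" shows "ginv g y $ a $ a \<noteq> 0"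
proof (cases "a = 0")
  case True then show ?thesis using g00[OF y] by simp
next
  case False then show ?thesis using gii[OF y False] by simp
qed

lemma xi_sq: "xi a * xi a = 1"
  by (simp add: xi_def)

lemma P_pos:
  assumes y: "y \<in> U"
  shows "xi mu * xi nu * ginv g y $ mu $ mu * ginv g y $ nu $ nu > 0"
proof -
  have "xi mu * xi nu * ginv g y $ mu $ mu * ginv g y $ nu $ nu =
     (xi mu * ginv g y $ mu $ mu) * (xi nu * ginv g y $ nu $ nu)" by (simp only: mult_ac)
  also have "xi mu * ginv g y $ mu $ mu = \<bar>ginv g y $ mu $ mu\<bar>"
    using g00[OF y] gii[OF y, of mu] by (cases "mu = 0") (simp_all add: xi_def)
  also have "xi nu * ginv g y $ nu $ nu = \<bar>ginv g y $ nu $ nu\<bar>"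
    using g00[OF y] gii[OF y, of nu] by (cases "nu = 0") (simp_all add: xi_def)
  finally show ?thesis using Gdiag_nz[OF y] by simp
qed

lemma D_pos:
  assumes y: "y \<in> U" and ne: "mu \<noteq> nu"
  shows "xi mu * xi nu * (ginv g y $ mu $ mu * ginv g y $ nu $ nu - ginv g y $ mu $ nu * ginv g y $ mu $ nu) > 0"
proof -
  let ?a = "ginv g y $ mu $ mu" and ?b = "ginv g y $ nu $ nu" and ?c = "ginv g y $ mu $ nu"
  show ?thesis
  proof (cases "mu = 0 \<or> nu = 0")
    case True
    have ab: "?a * ?b < 0 \<and> xi mu * xi nu = -1"
    proof (cases "mu = 0")
      case True
      then have "nu \<noteq> 0" using ne by simp
      then show ?thesis using True g00[OF y] gii[OF y \<open>nu \<noteq> 0\<close>] by (simp add: xi_def mult_neg_pos)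
    next
      case False
      then have "nu = 0" using \<open>mu = 0 \<or> nu = 0\<close> by simp
      then show ?thesis using False g00[OF y] gii[OF y False] by (simp add: xi_def mult_pos_neg)
    qed
    have "?c * ?c \<ge> 0" by simp
    then have n: "?a * ?b - ?c * ?c < 0" using ab by linarith
    have x: "xi mu * xi nu = -1" using ab by blast
    show ?thesis unfolding x using n by simp
  next
    case False
    then have x1: "xi mu * xi nu = 1" by (simp add: xi_def)
    have P: "?a * ?b > 0" using P_pos[OF y, of mu nu] x1 by (simp add: mult.assoc)
    have "\<bar>qq g mu nu y\<bar> < 1" using qq1[OF y, of mu nu] False ne by simp
    then have "\<bar>?c / sqrt (?a * ?b)\<bar> < 1" using x1 unfolding qq_def by (simp add: mult.assoc)
    moreover have s0: "sqrt (?a * ?b) > 0" using P by simp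
    ultimately have "\<bar>?c\<bar> / sqrt (?a * ?b) < 1" by (simp add: abs_divide)
    then have lt: "\<bar>?c\<bar> < sqrt (?a * ?b)" using pos_divide_less_eq[OF s0] by simp
    have "\<bar>?c\<bar> * \<bar>?c\<bar> < sqrt (?a * ?b) * sqrt (?a * ?b)"
      by (rule mult_strict_mono[OF lt lt]) (simp_all add: P)
    moreover have "sqrt (?a * ?b) * sqrt (?a * ?b) = ?a * ?b" using P by simp
    moreover have "\<bar>?c\<bar> * \<bar>?c\<bar> = ?c * ?c" by simp
    ultimately have "?c * ?c < ?a * ?b" by simp
    then show ?thesis unfolding x1 by simp
  qed
qed

lemma gam1_eq: "y \<in> U \<Longrightarrow> gam1 g mu y = det (g y) * ginv g y $ mu $ mu"
  unfolding gam1_def ginv_def using jacobi_minor[OF g_inv, of y "{mu}"] by (simp add: subdet_sing)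

lemma gam2_eq:
  assumes y: "y \<in> U" and ne: "mu \<noteq> nu"
  shows "gam2 g mu nu y = det (g y) * (ginv g y $ mu $ mu * ginv g y $ nu $ nu - ginv g y $ mu $ nu * ginv g y $ mu $ nu)"
proof -
  have "gam2 g mu nu y = det (g y) * subdet (ginv g y) {mu, nu}"
    unfolding gam2_def ginv_def using jacobi_minor[OF g_inv[OF y], of "{mu, nu}"] by simp
  also have "subdet (ginv g y) {mu, nu} = ginv g y $ mu $ mu * ginv g y $ nu $ nu - ginv g y $ mu $ nu * ginv g y $ nu $ mu"
    by (rule subdet_two[OF ne])
  finally show ?thesis using ginv_sym[OF y, of nu mu] by simp
qed

lemma gam2_nz: "y \<in> U \<Longrightarrow> mu \<noteq> nu \<Longrightarrow> gam2 g mu nu y \<noteq> 0"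
  using gam2_eq[of y mu nu] D_pos[of y mu nu] det_nz[of y] by auto

lemma gam2_smooth: "smooth_on4 U (gam2 g mu nu)"
  unfolding gam2_def[abs_def] by (rule smooth_subdet[OF openU gsmooth])

lemma sqrt_gam2_smooth: "mu \<noteq> nu \<Longrightarrow> smooth_on4 U (\<lambda>y. sqrt \<bar>gam2 g mu nu y\<bar>)"
  by (rule smooth_sqrt_abs[OF openU gam2_smooth]) (simp add: gam2_nz)

lemma P_smooth: "smooth_on4 U (\<lambda>y. xi mu * xi nu * ginv g y $ mu $ mu * ginv g y $ nu $ nu)"
  by (intro smooth_mult smooth_cmult ginv_smooth openU)

lemma qq_smooth: "smooth_on4 U (qq g mu nu)"
  unfolding qq_def[abs_def]
proof (rule smooth_divide[OF openU ginv_smooth])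
  show "smooth_on4 U (\<lambda>y. sqrt (xi mu * xi nu * ginv g y $ mu $ mu * ginv g y $ nu $ nu))"
    by (rule smooth_sqrt[OF openU P_smooth]) (rule P_pos)
  fix y assume "y \<in> U"
  then have "xi mu * xi nu * ginv g y $ mu $ mu * ginv g y $ nu $ nu > 0" by (rule P_pos)
  then show "sqrt (xi mu * xi nu * ginv g y $ mu $ mu * ginv g y $ nu $ nu) \<noteq> 0"
    by (metis less_irrefl real_sqrt_eq_zero_cancel_iff)
qed

lemma alpha_smooth: "mu \<noteq> nu \<Longrightarrow> smooth_on4 U (alpha g mu nu)"
proof (cases "mu = 0 \<or> nu = 0")
  case True
  then have "alpha g mu nu = (\<lambda>y. arsinh (qq g mu nu y))" unfolding alpha_def by auto
  then show ?thesis using smooth_arsinh[OF openU qq_smooth] by simp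
next
  case False
  assume ne: "mu \<noteq> nu"
  then have "alpha g mu nu = (\<lambda>y. arcsin (qq g mu nu y))" using False unfolding alpha_def by auto
  then show ?thesis using smooth_arcsin[OF openU qq_smooth] qq1 False ne by simp
qed

lemma qq_pd:
  assumes y: "y \<in> U"
  shows "pd k (qq g mu nu) y =
    pd k (\<lambda>z. ginv g z $ mu $ nu) y / sqrt (xi mu * xi nu * ginv g y $ mu $ mu * ginv g y $ nu $ nu)
    - ginv g y $ mu $ nu * (xi mu * xi nu * (pd k (\<lambda>z. ginv g z $ mu $ mu) y * ginv g y $ nu $ nu
          + ginv g y $ mu $ mu * pd k (\<lambda>z. ginv g z $ nu $ nu) y))
      / (2 * (xi mu * xi nu * ginv g y $ mu $ mu * ginv g y $ nu $ nu) * sqrt (xi mu * xi nu * ginv g y $ mu $ mu * ginv g y $ nu $ nu))"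
proof -
  define P where "P = (\<lambda>z. xi mu * xi nu * ginv g z $ mu $ mu * ginv g z $ nu $ nu)"
  have Ppos: "P y > 0" unfolding P_def by (rule P_pos[OF y])
  have Pd: "P differentiable (at y)" unfolding P_def using smooth_diffble[OF P_smooth y] .
  have hd: "(\<lambda>z. inverse (sqrt (P z))) differentiable (at y)"
  proof -
    have "smooth_on4 U (\<lambda>z. inverse (sqrt (P z)))" unfolding P_def
      by (intro smooth_inverse_pos smooth_sqrt P_smooth openU) (simp_all add: P_pos)
    then show ?thesis using smooth_diffble y by blast
  qed
  have qe: "qq g mu nu = (\<lambda>z. ginv g z $ mu $ nu * inverse (sqrt (P z)))"
    unfolding qq_def P_def by (simp add: divide_inverse)
  have dphi: "((\<lambda>t. inverse (sqrt t)) has_real_derivative - (inverse (sqrt (P y)) / 2 * inverse (sqrt (P y) ^ 2))) (at (P y))"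
    using DERIV_inverse_fun[OF DERIV_real_sqrt[OF Ppos]] Ppos by (simp add: numeral_2_eq_2)
  have dP: "pd k P y = xi mu * xi nu * pd k (\<lambda>z. ginv g z $ mu $ mu) y * ginv g y $ nu $ nu
       + xi mu * xi nu * ginv g y $ mu $ mu * pd k (\<lambda>z. ginv g z $ nu $ nu) y"
  proof -
    have "pd k P y = pd k (\<lambda>z. xi mu * xi nu * ginv g z $ mu $ mu) y * ginv g y $ nu $ nu
        + xi mu * xi nu * ginv g y $ mu $ mu * pd k (\<lambda>z. ginv g z $ nu $ nu) y"
      unfolding P_def by (rule pd_mult) (simp_all add: ginv_diffble y)
    also have "pd k (\<lambda>z. xi mu * xi nu * ginv g z $ mu $ mu) y = xi mu * xi nu * pd k (\<lambda>z. ginv g z $ mu $ mu) y"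
      by (rule pd_cmult) (simp add: ginv_diffble y)
    finally show ?thesis by simp
  qed
  have "pd k (qq g mu nu) y = pd k (\<lambda>z. ginv g z $ mu $ nu) y * inverse (sqrt (P y))
      + ginv g y $ mu $ nu * pd k (\<lambda>z. inverse (sqrt (P z))) y"
    unfolding qe by (rule pd_mult[OF ginv_diffble[OF y] hd])
  also have "pd k (\<lambda>z. inverse (sqrt (P z))) y = - (inverse (sqrt (P y)) / 2 * inverse (sqrt (P y) ^ 2)) * pd k P y"
    by (rule pd_comp[OF Pd dphi])
  finally have "pd k (qq g mu nu) y = pd k (\<lambda>z. ginv g z $ mu $ nu) y * inverse (sqrt (P y))
      + ginv g y $ mu $ nu * (- (inverse (sqrt (P y)) / 2 * inverse (sqrt (P y) ^ 2)) *
         (xi mu * xi nu * pd k (\<lambda>z. ginv g z $ mu $ mu) y * ginv g y $ nu $ nu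
       + xi mu * xi nu * ginv g y $ mu $ mu * pd k (\<lambda>z. ginv g z $ nu $ nu) y))"
    unfolding dP by simp
  also have "\<dots> = pd k (\<lambda>z. ginv g z $ mu $ nu) y / sqrt (P y)
    - ginv g y $ mu $ nu * ((xi mu * xi nu) * (pd k (\<lambda>z. ginv g z $ mu $ mu) y * ginv g y $ nu $ nu
          + ginv g y $ mu $ mu * pd k (\<lambda>z. ginv g z $ nu $ nu) y))
      / (2 * P y * sqrt (P y))"
    using qq_alg[OF Ppos, of "pd k (\<lambda>z. ginv g z $ mu $ nu) y" "ginv g y $ mu $ nu" "xi mu * xi nu"
        "pd k (\<lambda>z. ginv g z $ mu $ mu) y" "ginv g y $ nu $ nu" "ginv g y $ mu $ mu" "pd k (\<lambda>z. ginv g z $ nu $ nu) y"]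
    by (simp add: mult.assoc)
  finally show ?thesis unfolding P_def .
qed

lemma alpha_pd:
  assumes y: "y \<in> U" and ne: "mu \<noteq> nu"
  shows "pd k (alpha g mu nu) y = pd k (qq g mu nu) y / sqrt (1 - xi mu * xi nu * (qq g mu nu y)\<^sup>2)"
proof (cases "mu = 0 \<or> nu = 0")
  case True
  then have ae: "alpha g mu nu = (\<lambda>z. arsinh (qq g mu nu z))" unfolding alpha_def by auto
  have x: "xi mu * xi nu = -1" using True ne by (auto simp: xi_def)
  have "pd k (alpha g mu nu) y = 1 / sqrt ((qq g mu nu y)\<^sup>2 + 1) * pd k (qq g mu nu) y"
    unfolding ae by (rule pd_comp[OF smooth_diffble[OF qq_smooth y]]) (rule arsinh_real_has_field_derivative)
  then show ?thesis unfolding x by (simp add: add.commute)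
next
  case False
  then have ae: "alpha g mu nu = (\<lambda>z. arcsin (qq g mu nu z))" unfolding alpha_def by auto
  have x: "xi mu * xi nu = 1" using False by (auto simp: xi_def)
  have b: "\<bar>qq g mu nu y\<bar> < 1" using qq1[OF y] False ne by simp
  have "pd k (alpha g mu nu) y = inverse (sqrt (1 - (qq g mu nu y)\<^sup>2)) * pd k (qq g mu nu) y"
    unfolding ae by (rule pd_comp[OF smooth_diffble[OF qq_smooth y]]) (rule DERIV_arcsin, use b in auto)
  then show ?thesis unfolding x by (simp add: divide_inverse mult.commute)
qed

lemma S_formula:
  assumes y: "y \<in> U" and ne: "mu \<noteq> nu"
  shows "sqrt \<bar>gam2 g mu nu y\<bar> * pd nu (alpha g mu nu) y =
    sqrtg g y * (pd nu (\<lambda>z. ginv g z $ mu $ nu) y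
      - ginv g y $ mu $ nu * (pd nu (\<lambda>z. ginv g z $ mu $ mu) y / ginv g y $ mu $ mu
                              + pd nu (\<lambda>z. ginv g z $ nu $ nu) y / ginv g y $ nu $ nu) / 2)"
proof -
  let ?a = "ginv g y $ mu $ mu" and ?b = "ginv g y $ nu $ nu" and ?c = "ginv g y $ mu $ nu"
  let ?e = "xi mu * xi nu"
  have e2: "?e * ?e = 1" by (simp add: xi_def)
  have P: "?e * ?a * ?b > 0" using P_pos[OF y] .
  have D: "?e * (?a * ?b - ?c * ?c) > 0" using D_pos[OF y ne] .
  have qy: "qq g mu nu y = ?c / sqrt (?e * ?a * ?b)" unfolding qq_def ..
  show ?thesis
    unfolding gam2_eq[OF y ne] alpha_pd[OF y ne] qq_pd[OF y] qy sqrtg_def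
    using S_alg[OF e2 P D, of "det (g y)"] by simp
qed

end

lemma sum_compl_single:
  fixes f :: "'a::finite \<Rightarrow> real"
  assumes "f mu = 0"
  shows "(\<Sum>a\<in>-{mu}. f a) = (\<Sum>a\<in>UNIV. f a)"
proof -
  have "(\<Sum>a\<in>UNIV. f a) = f mu + (\<Sum>a\<in>UNIV - {mu}. f a)" by (simp add: sum.remove)
  then show ?thesis using assms by (simp add: Compl_eq_Diff_UNIV)
qed

context MS
begin

lemma nvec_prod:
  assumes y: "y \<in> U"
  shows "xi a * nvec g a s y * nvec g a n y = ginv g y $ a $ s * ginv g y $ a $ n / ginv g y $ a $ a"
proof -
  let ?G = "ginv g y $ a $ a"
  have sg: "xi a * \<bar>?G\<bar> = ?G" by (rule Gdiag_sign[OF y])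
  have nz: "?G \<noteq> 0" by (rule Gdiag_nz[OF y])
  have x2: "xi a * xi a = 1" by (rule xi_sq)
  have "xi a * nvec g a s y * nvec g a n y = (xi a * xi a) * xi a * (ginv g y $ a $ s * ginv g y $ a $ n)
       / (sqrt \<bar>?G\<bar> * sqrt \<bar>?G\<bar>)"
    unfolding nvec_def by (simp add: field_simps)
  also have "\<dots> = xi a * (ginv g y $ a $ s * ginv g y $ a $ n) / \<bar>?G\<bar>" using x2 by simp
  also have "\<dots> = (ginv g y $ a $ s * ginv g y $ a $ n) / ?G"
  proof -
    have "\<bar>?G\<bar> = xi a * ?G" using sg x2 by (metis mult.assoc mult_1)
    moreover have "xi a \<noteq> 0" using x2 by auto
    ultimately show ?thesis using nz x2 by (simp add: field_simps)
  qed
  finally show ?thesis .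
qed

lemma nvec_smooth: "smooth_on4 U (nvec g a b)"
  unfolding nvec_def[abs_def]
proof (rule smooth_divide[OF openU smooth_cmult[OF openU ginv_smooth]])
  show "smooth_on4 U (\<lambda>y. sqrt \<bar>ginv g y $ a $ a\<bar>)"
    by (rule smooth_sqrt_abs[OF openU ginv_smooth]) (rule Gdiag_nz)
  fix y assume "y \<in> U"
  then show "sqrt \<bar>ginv g y $ a $ a\<bar> \<noteq> 0" using Gdiag_nz by simp
qed

lemma K_identity:
  assumes y: "y \<in> U"
  shows "sqrt \<bar>gam1 g mu y\<bar> * Ktr g mu y =
    1/2 * ((\<Sum>nu\<in>-{mu}. sqrt \<bar>gam2 g mu nu y\<bar> * pd nu (alpha g mu nu) y)
      - sqrtg g y * (\<Sum>nu\<in>UNIV. \<Sum>sig\<in>UNIV. Chr g mu nu sig y * ginv g y $ nu $ sig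
                                    - Chr g nu nu sig y * ginv g y $ sig $ mu)
      + (\<Sum>nu\<in>UNIV. sqrtg g y *
           (\<Sum>sig\<in>UNIV. xi mu * nvec g mu sig y * nvec g mu nu y * Chr g mu nu sig y
                        - xi nu * nvec g nu sig y * nvec g nu mu y * Chr g nu nu sig y)))"
proof -
  let ?G = "\<lambda>a b. ginv g y $ a $ b"
  let ?C = "\<lambda>l m n. Chr g l m n y"
  let ?dG = "\<lambda>k a b. pd k (\<lambda>z. ginv g z $ a $ b) y"
  let ?sg = "sqrtg g y"
  have Gmm: "?G mu mu \<noteq> 0" by (rule Gdiag_nz[OF y])
  have alg: "-2 * (\<Sum>a\<in>UNIV. \<Sum>b\<in>UNIV. (?G a b - ?G a mu * ?G mu b / ?G mu mu) * ?C mu a b) =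
    (\<Sum>\<nu>\<in>-{mu}. ?dG \<nu> mu \<nu> - ?G mu \<nu> * (?dG \<nu> mu mu / ?G mu mu + ?dG \<nu> \<nu> \<nu> / ?G \<nu> \<nu>) / 2)
    - (\<Sum>\<nu>\<in>UNIV. \<Sum>\<sigma>\<in>UNIV. ?C mu \<nu> \<sigma> * ?G \<nu> \<sigma> - ?C \<nu> \<nu> \<sigma> * ?G \<sigma> mu)
    + (\<Sum>\<nu>\<in>UNIV. \<Sum>\<sigma>\<in>UNIV. ?G mu \<sigma> * ?G mu \<nu> * ?C mu \<nu> \<sigma> / ?G mu mu - ?G \<nu> \<sigma> * ?G \<nu> mu * ?C \<nu> \<nu> \<sigma> / ?G \<nu> \<nu>)"
    by (rule xmu_algebra) (simp_all add: ginv_sym[OF y] Chr_sym[OF y] dG_chr[OF y] Gdiag_nz[OF y])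
  have Kl: "sqrt \<bar>gam1 g mu y\<bar> * Ktr g mu y = - ?sg * (\<Sum>a\<in>UNIV. \<Sum>b\<in>UNIV. (?G a b - ?G a mu * ?G mu b / ?G mu mu) * ?C mu a b)"
  proof -
    have sq: "sqrt \<bar>gam1 g mu y\<bar> = ?sg * sqrt \<bar>?G mu mu\<bar>"
      unfolding gam1_eq[OF y] sqrtg_def by (simp add: abs_mult real_sqrt_mult)
    have s0: "sqrt \<bar>?G mu mu\<bar> \<noteq> 0" using Gmm by simp
    have "Ktr g mu y = (\<Sum>a\<in>-{mu}. \<Sum>b\<in>-{mu}. (?G a b - ?G a mu * ?G mu b / ?G mu mu) * (- ?C mu a b / sqrt \<bar>?G mu mu\<bar>))"
      unfolding Ktr_def gam1inv_def Kab_def ..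
    also have "\<dots> = (\<Sum>a\<in>UNIV. \<Sum>b\<in>UNIV. (?G a b - ?G a mu * ?G mu b / ?G mu mu) * (- ?C mu a b / sqrt \<bar>?G mu mu\<bar>))"
    proof -
      have "(\<Sum>a\<in>-{mu}. \<Sum>b\<in>-{mu}. (?G a b - ?G a mu * ?G mu b / ?G mu mu) * (- ?C mu a b / sqrt \<bar>?G mu mu\<bar>))
        = (\<Sum>a\<in>-{mu}. \<Sum>b\<in>UNIV. (?G a b - ?G a mu * ?G mu b / ?G mu mu) * (- ?C mu a b / sqrt \<bar>?G mu mu\<bar>))"
        by (intro sum.cong refl sum_compl_single) (simp add: Gmm)
      also have "\<dots> = (\<Sum>a\<in>UNIV. \<Sum>b\<in>UNIV. (?G a b - ?G a mu * ?G mu b / ?G mu mu) * (- ?C mu a b / sqrt \<bar>?G mu mu\<bar>))"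
        by (rule sum_compl_single) (simp add: Gmm)
      finally show ?thesis .
    qed
    also have "\<dots> = - (\<Sum>a\<in>UNIV. \<Sum>b\<in>UNIV. (?G a b - ?G a mu * ?G mu b / ?G mu mu) * ?C mu a b) / sqrt \<bar>?G mu mu\<bar>"
      by (simp add: sum_divide_distrib sum_negf)
    finally show ?thesis unfolding sq using s0 by simp
  qed
  have Sl: "(\<Sum>nu\<in>-{mu}. sqrt \<bar>gam2 g mu nu y\<bar> * pd nu (alpha g mu nu) y) =
     ?sg * (\<Sum>\<nu>\<in>-{mu}. ?dG \<nu> mu \<nu> - ?G mu \<nu> * (?dG \<nu> mu mu / ?G mu mu + ?dG \<nu> \<nu> \<nu> / ?G \<nu> \<nu>) / 2)"
    unfolding sum_distrib_left by (intro sum.cong refl) (simp add: S_formula[OF y])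
  have Wl: "(\<Sum>nu\<in>UNIV. ?sg *
           (\<Sum>sig\<in>UNIV. xi mu * nvec g mu sig y * nvec g mu nu y * Chr g mu nu sig y
                        - xi nu * nvec g nu sig y * nvec g nu mu y * Chr g nu nu sig y)) =
     ?sg * (\<Sum>\<nu>\<in>UNIV. \<Sum>\<sigma>\<in>UNIV. ?G mu \<sigma> * ?G mu \<nu> * ?C mu \<nu> \<sigma> / ?G mu mu - ?G \<nu> \<sigma> * ?G \<nu> mu * ?C \<nu> \<nu> \<sigma> / ?G \<nu> \<nu>)"
    unfolding sum_distrib_left by (intro sum.cong refl) (simp add: nvec_prod[OF y])
  show ?thesis unfolding Kl Sl Wl using alg by (simp add: algebra_simps)
qed

lemma Vf_smooth: "smooth_on4 U (\<lambda>y. sqrtg g y * (\<Sum>nu\<in>UNIV. \<Sum>sig\<in>UNIV. Chr g mu nu sig y * ginv g y $ nu $ sig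
                                    - Chr g nu nu sig y * ginv g y $ sig $ mu))"
  by (intro smooth_mult smooth_sum smooth_diff sqrtg_smooth Chr_smooth ginv_smooth openU) auto

lemma Wf_smooth: "smooth_on4 U (\<lambda>y. sqrtg g y *
           (\<Sum>sig\<in>UNIV. xi mu * nvec g mu sig y * nvec g mu nu y * Chr g mu nu sig y
                        - xi nu * nvec g nu sig y * nvec g nu mu y * Chr g nu nu sig y))"
  by (intro smooth_mult smooth_sum smooth_diff smooth_cmult sqrtg_smooth Chr_smooth nvec_smooth openU) auto

lemma Tf_smooth: "mu \<noteq> nu \<Longrightarrow> smooth_on4 U (\<lambda>y. alpha g mu nu y * pd nu (\<lambda>z. sqrt \<bar>gam2 g mu nu z\<bar>) y)"
  by (intro smooth_mult alpha_smooth smooth_pd sqrt_gam2_smooth openU)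

lemma Sf_smooth: "mu \<noteq> nu \<Longrightarrow> smooth_on4 U (\<lambda>y. sqrt \<bar>gam2 g mu nu y\<bar> * pd nu (alpha g mu nu) y)"
  by (intro smooth_mult alpha_smooth smooth_pd sqrt_gam2_smooth openU)

lemma per_mu:
  assumes x: "x \<in> U"
  shows "2 * pd mu (\<lambda>y. sqrt \<bar>gam1 g mu y\<bar> * Ktr g mu y) x
      - (\<Sum>nu\<in>-{mu}. pd mu (pd nu (\<lambda>y. sqrt \<bar>gam2 g mu nu y\<bar> * alpha g mu nu y)) x)
    = - pd mu (\<lambda>y. sqrtg g y * (\<Sum>nu\<in>UNIV. \<Sum>sig\<in>UNIV. Chr g mu nu sig y * ginv g y $ nu $ sig
                                    - Chr g nu nu sig y * ginv g y $ sig $ mu)) x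
      - (\<Sum>nu\<in>-{mu}. pd mu (\<lambda>y. alpha g mu nu y * pd nu (\<lambda>z. sqrt \<bar>gam2 g mu nu z\<bar>) y) x)
      + (\<Sum>nu\<in>UNIV. pd mu (\<lambda>y. sqrtg g y *
           (\<Sum>sig\<in>UNIV. xi mu * nvec g mu sig y * nvec g mu nu y * Chr g mu nu sig y
                        - xi nu * nvec g nu sig y * nvec g nu mu y * Chr g nu nu sig y)) x)"
proof -
  define Sf where "Sf = (\<lambda>nu y. sqrt \<bar>gam2 g mu nu y\<bar> * pd nu (alpha g mu nu) y)"
  define Tf where "Tf = (\<lambda>nu y. alpha g mu nu y * pd nu (\<lambda>z. sqrt \<bar>gam2 g mu nu z\<bar>) y)"
  define Vf where "Vf = (\<lambda>y. sqrtg g y * (\<Sum>nu\<in>UNIV. \<Sum>sig\<in>UNIV. Chr g mu nu sig y * ginv g y $ nu $ sig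
                                    - Chr g nu nu sig y * ginv g y $ sig $ mu))"
  define Wf where "Wf = (\<lambda>nu y. sqrtg g y *
           (\<Sum>sig\<in>UNIV. xi mu * nvec g mu sig y * nvec g mu nu y * Chr g mu nu sig y
                        - xi nu * nvec g nu sig y * nvec g nu mu y * Chr g nu nu sig y))"
  have Sd: "nu \<in> -{mu} \<Longrightarrow> Sf nu differentiable (at x)" for nu
    unfolding Sf_def using smooth_diffble[OF Sf_smooth x] by auto
  have Td: "nu \<in> -{mu} \<Longrightarrow> Tf nu differentiable (at x)" for nu
    unfolding Tf_def using smooth_diffble[OF Tf_smooth x] by auto
  have Vd: "Vf differentiable (at x)" unfolding Vf_def using smooth_diffble[OF Vf_smooth x] .
  have Wd: "Wf nu differentiable (at x)" for nu unfolding Wf_def using smooth_diffble[OF Wf_smooth x] .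
  have pdA: "pd mu (pd nu (\<lambda>y. sqrt \<bar>gam2 g mu nu y\<bar> * alpha g mu nu y)) x = pd mu (Tf nu) x + pd mu (Sf nu) x"
    if nu: "nu \<in> -{mu}" for nu
  proof -
    have ne: "mu \<noteq> nu" using nu by auto
    have "pd mu (pd nu (\<lambda>y. sqrt \<bar>gam2 g mu nu y\<bar> * alpha g mu nu y)) x = pd mu (\<lambda>y. Tf nu y + Sf nu y) x"
    proof (rule pd_local[OF openU x])
      fix y assume y: "y \<in> U"
      show "pd nu (\<lambda>y. sqrt \<bar>gam2 g mu nu y\<bar> * alpha g mu nu y) y = Tf nu y + Sf nu y"
        unfolding Tf_def Sf_def
        using pd_mult[OF smooth_diffble[OF sqrt_gam2_smooth[OF ne] y] smooth_diffble[OF alpha_smooth[OF ne] y], of nu]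
        by (simp add: mult.commute)
    qed
    also have "\<dots> = pd mu (Tf nu) x + pd mu (Sf nu) x" by (rule pd_add[OF Td[OF nu] Sd[OF nu]])
    finally show ?thesis .
  qed
  have pdK: "pd mu (\<lambda>y. sqrt \<bar>gam1 g mu y\<bar> * Ktr g mu y) x =
      1/2 * ((\<Sum>nu\<in>-{mu}. pd mu (Sf nu) x) - pd mu Vf x + (\<Sum>nu\<in>UNIV. pd mu (Wf nu) x))"
  proof -
    have "pd mu (\<lambda>y. sqrt \<bar>gam1 g mu y\<bar> * Ktr g mu y) x =
        pd mu (\<lambda>y. 1/2 * ((\<Sum>nu\<in>-{mu}. Sf nu y) - Vf y + (\<Sum>nu\<in>UNIV. Wf nu y))) x"
      by (rule pd_local[OF openU x]) (simp add: K_identity Sf_def Vf_def Wf_def)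
    also have "\<dots> = 1/2 * pd mu (\<lambda>y. (\<Sum>nu\<in>-{mu}. Sf nu y) - Vf y + (\<Sum>nu\<in>UNIV. Wf nu y)) x"
      by (rule pd_cmult) (intro differentiable_add differentiable_diff differentiable_sum Vd; use Sd Wd in auto)
    also have "pd mu (\<lambda>y. (\<Sum>nu\<in>-{mu}. Sf nu y) - Vf y + (\<Sum>nu\<in>UNIV. Wf nu y)) x =
        pd mu (\<lambda>y. (\<Sum>nu\<in>-{mu}. Sf nu y) - Vf y) x + pd mu (\<lambda>y. \<Sum>nu\<in>UNIV. Wf nu y) x"
      by (rule pd_add) (intro differentiable_add differentiable_diff differentiable_sum Vd; use Sd Wd in auto)+
    also have "pd mu (\<lambda>y. (\<Sum>nu\<in>-{mu}. Sf nu y) - Vf y) x = pd mu (\<lambda>y. \<Sum>nu\<in>-{mu}. Sf nu y) x - pd mu Vf x"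
      by (rule pd_diff) (intro differentiable_sum Vd; use Sd in auto)+
    also have "pd mu (\<lambda>y. \<Sum>nu\<in>-{mu}. Sf nu y) x = (\<Sum>nu\<in>-{mu}. pd mu (Sf nu) x)"
      by (rule pd_sum) (use Sd in auto)
    also have "pd mu (\<lambda>y. \<Sum>nu\<in>UNIV. Wf nu y) x = (\<Sum>nu\<in>UNIV. pd mu (Wf nu) x)"
      by (rule pd_sum) (use Wd in auto)
    finally show ?thesis .
  qed
  have "(\<Sum>nu\<in>-{mu}. pd mu (pd nu (\<lambda>y. sqrt \<bar>gam2 g mu nu y\<bar> * alpha g mu nu y)) x) =
      (\<Sum>nu\<in>-{mu}. pd mu (Tf nu) x) + (\<Sum>nu\<in>-{mu}. pd mu (Sf nu) x)"
    by (simp add: pdA sum.distrib)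
  then have "2 * pd mu (\<lambda>y. sqrt \<bar>gam1 g mu y\<bar> * Ktr g mu y) x
      - (\<Sum>nu\<in>-{mu}. pd mu (pd nu (\<lambda>y. sqrt \<bar>gam2 g mu nu y\<bar> * alpha g mu nu y)) x)
    = - pd mu Vf x - (\<Sum>nu\<in>-{mu}. pd mu (Tf nu) x) + (\<Sum>nu\<in>UNIV. pd mu (Wf nu) x)"
    unfolding pdK by (simp add: field_simps)
  then show ?thesis by (simp only: Tf_def Vf_def Wf_def)
qed

end

theorem mainTheorem7:
  fixes g :: "real^4 \<Rightarrow> real^4^4" and U :: "(real^4) set"
  assumes "open U"
    and "\<And>x mu nu. x \<in> U \<Longrightarrow> g x $ mu $ nu = g x $ nu $ mu"
    and "\<And>mu nu. smooth_on4 U (\<lambda>y. g y $ mu $ nu)"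
    and "\<And>x. x \<in> U \<Longrightarrow> \<exists>P. invertible P \<and> transpose P ** g x ** P = eta"
    and "\<And>x. x \<in> U \<Longrightarrow> ginv g x $ 0 $ 0 < 0"
    and "\<And>x i. x \<in> U \<Longrightarrow> i \<noteq> 0 \<Longrightarrow> ginv g x $ i $ i > 0"
    and "\<And>x i j. x \<in> U \<Longrightarrow> i \<noteq> 0 \<Longrightarrow> j \<noteq> 0 \<Longrightarrow> i \<noteq> j \<Longrightarrow> \<bar>qq g i j x\<bar> < 1"
    and "x \<in> U"
  shows "LK g x = LGamma g x
      - (\<Sum>mu\<in>UNIV. \<Sum>nu\<in>-{mu}.
           pd mu (\<lambda>y. alpha g mu nu y * pd nu (\<lambda>z. sqrt \<bar>gam2 g mu nu z\<bar>) y) x)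
      + (\<Sum>mu\<in>UNIV. \<Sum>nu\<in>UNIV. pd mu (\<lambda>y. sqrtg g y *
           (\<Sum>sig\<in>UNIV. xi mu * nvec g mu sig y * nvec g mu nu y * Chr g mu nu sig y
                        - xi nu * nvec g nu sig y * nvec g nu mu y * Chr g nu nu sig y)) x)
    \<and> LGamma g x = sqrtg g x * Rscal g x
      - (\<Sum>mu\<in>UNIV. pd mu (\<lambda>y. sqrtg g y *
           (\<Sum>nu\<in>UNIV. \<Sum>sig\<in>UNIV. Chr g mu nu sig y * ginv g y $ nu $ sig
                                    - Chr g nu nu sig y * ginv g y $ sig $ mu)) x)"
proof -
  interpret MS g U
    by (unfold_locales) (fact assms)+
  have x: "x \<in> U" by (rule assms(8))
  define pK where "pK = (\<lambda>mu. pd mu (\<lambda>y. sqrt \<bar>gam1 g mu y\<bar> * Ktr g mu y) x)"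
  define pA where "pA = (\<lambda>mu nu. pd mu (pd nu (\<lambda>y. sqrt \<bar>gam2 g mu nu y\<bar> * alpha g mu nu y)) x)"
  define pV where "pV = (\<lambda>mu. pd mu (\<lambda>y. sqrtg g y * (\<Sum>nu\<in>UNIV. \<Sum>sig\<in>UNIV. Chr g mu nu sig y * ginv g y $ nu $ sig
                                    - Chr g nu nu sig y * ginv g y $ sig $ mu)) x)"
  define pT where "pT = (\<lambda>mu nu. pd mu (\<lambda>y. alpha g mu nu y * pd nu (\<lambda>z. sqrt \<bar>gam2 g mu nu z\<bar>) y) x)"
  define pW where "pW = (\<lambda>mu nu. pd mu (\<lambda>y. sqrtg g y *
           (\<Sum>sig\<in>UNIV. xi mu * nvec g mu sig y * nvec g mu nu y * Chr g mu nu sig y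
                        - xi nu * nvec g nu sig y * nvec g nu mu y * Chr g nu nu sig y)) x)"
  have pm: "2 * pK mu - (\<Sum>nu\<in>-{mu}. pA mu nu) = - pV mu - (\<Sum>nu\<in>-{mu}. pT mu nu) + (\<Sum>nu\<in>UNIV. pW mu nu)" for mu
    unfolding pK_def pA_def pV_def pT_def pW_def by (rule per_mu[OF x])
  have c2: "LGamma g x = sqrtg g x * Rscal g x - (\<Sum>mu\<in>UNIV. pV mu)"
    unfolding pV_def by (rule conj2[OF x])
  have LK: "LK g x = sqrtg g x * Rscal g x + 2 * (\<Sum>mu\<in>UNIV. pK mu) - (\<Sum>mu\<in>UNIV. \<Sum>nu\<in>-{mu}. pA mu nu)"
    unfolding LK_def pK_def pA_def ..
  have "2 * (\<Sum>mu\<in>UNIV. pK mu) - (\<Sum>mu\<in>UNIV. \<Sum>nu\<in>-{mu}. pA mu nu) =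
      (\<Sum>mu\<in>UNIV. 2 * pK mu - (\<Sum>nu\<in>-{mu}. pA mu nu))"
    by (simp add: sum_distrib_left sum_subtractf)
  also have "\<dots> = (\<Sum>mu\<in>UNIV. - pV mu - (\<Sum>nu\<in>-{mu}. pT mu nu) + (\<Sum>nu\<in>UNIV. pW mu nu))"
    using pm by simp
  also have "\<dots> = - (\<Sum>mu\<in>UNIV. pV mu) - (\<Sum>mu\<in>UNIV. \<Sum>nu\<in>-{mu}. pT mu nu) + (\<Sum>mu\<in>UNIV. \<Sum>nu\<in>UNIV. pW mu nu)"
    by (simp add: sum.distrib sum_subtractf sum_negf)
  finally have main: "LK g x = LGamma g x - (\<Sum>mu\<in>UNIV. \<Sum>nu\<in>-{mu}. pT mu nu) + (\<Sum>mu\<in>UNIV. \<Sum>nu\<in>UNIV. pW mu nu)"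
    unfolding LK c2 by simp
  show ?thesis
  proof
    show "LK g x = LGamma g x
      - (\<Sum>mu\<in>UNIV. \<Sum>nu\<in>-{mu}.
           pd mu (\<lambda>y. alpha g mu nu y * pd nu (\<lambda>z. sqrt \<bar>gam2 g mu nu z\<bar>) y) x)
      + (\<Sum>mu\<in>UNIV. \<Sum>nu\<in>UNIV. pd mu (\<lambda>y. sqrtg g y *
           (\<Sum>sig\<in>UNIV. xi mu * nvec g mu sig y * nvec g mu nu y * Chr g mu nu sig y
                        - xi nu * nvec g nu sig y * nvec g nu mu y * Chr g nu nu sig y)) x)"
      using main unfolding pT_def pW_def .
    show "LGamma g x = sqrtg g x * Rscal g x
      - (\<Sum>mu\<in>UNIV. pd mu (\<lambda>y. sqrtg g y *
           (\<Sum>nu\<in>UNIV. \<Sum>sig\<in>UNIV. Chr g mu nu sig y * ginv g y $ nu $ sig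
                                    - Chr g nu nu sig y * ginv g y $ sig $ mu)) x)"
      by (rule conj2[OF x])
  qed
qed

end
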